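(* For $p+q\ge4$, $HL^0(\mathfrak h_{p,q};\mathfrak h_{p,q})=0$ and $HL^1(\mathfrak h_{p,q};\mathfrak h_{p,q})=\langle I\rangle$ (one-dimensional), where $I:\mathfrak h_{p,q}\to\mathfrak h_{p,q}$ is the linear map with $I(\alpha_{ij})=0$, $I(\beta_{ij})=0$ and $I(\partial_i)=\partial_i$ for $i=1,\dots,n$.
   Context: Let $p,q$ be nonnegative integers, $n=p+q$. On $\mathbf R^n$ write $\partial_i=\partial/\partial x^i$; $\alpha_{ij}=x_i\partial_j-x_j\partial_i$ ($1\le i<j\le p$ or $p+1\le i<j\le n$), $\beta_{ij}=x_i\partial_j+x_j\partial_i$ ($1\le i\le p<j\le n$); $\mathfrak h_{p,q}$ is the Lie algebra of vector fields with basis $\{\alpha_{ij}\}\cup\{\beta_{ij}\}\cup\{\partial_i\}$. For a Leibniz (e.g. Lie) algebra $\mathfrak g$ and representation $V$ (here $V=\mathfrak g$ with the bracket), $HL^*(\mathfrak g;V)$ is the cohomology of $CL^k=\mathrm{Hom}(\mathfrak g^{\otimes k},V)$ with coboundary $\delta f(g_1\otimes\cdots\otimes g_{k+1})=[g_1,f(g_2\otimes\cdots\otimes g_{k+1})]+\sum_{i=2}^{k+1}(-1)^i[f(g_1\otimes\cdots\widehat{g_i}\cdots\otimes g_{k+1}),g_i]+\sum_{1\le i<j\le k+1}(-1)^{j+1}f(g_1\otimes\cdots\otimes g_{i-1}\otimes[g_i,g_j]\otimes\cdots\widehat{g_j}\cdots\otimes g_{k+1})$. *)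

theory Defs
  imports "HOL-Analysis.Analysis"
begin

text \<open>Vector fields on R^n: a field X assigns to a point x (coordinates x 1, ..., x n)
  its component vector (components 1..n).  Coordinates/components are 1-based.\<close>
type_synonym vf = "(nat \<Rightarrow> real) \<Rightarrow> nat \<Rightarrow> real"

definition vzero :: vf where "vzero = (\<lambda>x k. 0)"
definition vadd :: "vf \<Rightarrow> vf \<Rightarrow> vf" where "vadd X Y = (\<lambda>x k. X x k + Y x k)"
definition vsc :: "real \<Rightarrow> vf \<Rightarrow> vf" where "vsc c X = (\<lambda>x k. c * X x k)"

definition pd :: "nat \<Rightarrow> ((nat \<Rightarrow> real) \<Rightarrow> real) \<Rightarrow> (nat \<Rightarrow> real) \<Rightarrow> real" where
  "pd l f x = deriv (\<lambda>t. f (x(l := t))) (x l)"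

definition br :: "nat \<Rightarrow> nat \<Rightarrow> vf \<Rightarrow> vf \<Rightarrow> vf" where
  "br p q X Y = (\<lambda>x k. \<Sum>l=1..p+q. X x l * pd l (\<lambda>y. Y y k) x - Y x l * pd l (\<lambda>y. X y k) x)"

definition alpha :: "nat \<Rightarrow> nat \<Rightarrow> vf" where
  "alpha i j = (\<lambda>x k. if k = j then x i else if k = i then - x j else 0)"
definition beta :: "nat \<Rightarrow> nat \<Rightarrow> vf" where
  "beta i j = (\<lambda>x k. if k = j then x i else if k = i then x j else 0)"
definition part :: "nat \<Rightarrow> vf" where
  "part i = (\<lambda>x k. if k = i then 1 else 0)"

definition Aidx :: "nat \<Rightarrow> nat \<Rightarrow> (nat \<times> nat) set" where
  "Aidx p q = {(i,j). (1 \<le> i \<and> i < j \<and> j \<le> p) \<or> (p+1 \<le> i \<and> i < j \<and> j \<le> p+q)}"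
definition Bidx :: "nat \<Rightarrow> nat \<Rightarrow> (nat \<times> nat) set" where
  "Bidx p q = {(i,j). 1 \<le> i \<and> i \<le> p \<and> p < j \<and> j \<le> p+q}"

definition lincomb :: "nat \<Rightarrow> nat \<Rightarrow> (nat \<times> nat \<Rightarrow> real) \<Rightarrow> (nat \<times> nat \<Rightarrow> real) \<Rightarrow> (nat \<Rightarrow> real) \<Rightarrow> vf" where
  "lincomb p q a b c = (\<lambda>x k. (\<Sum>(i,j)\<in>Aidx p q. a (i,j) * alpha i j x k)
       + (\<Sum>(i,j)\<in>Bidx p q. b (i,j) * beta i j x k)
       + (\<Sum>i=1..p+q. c i * part i x k))"

definition hpq :: "nat \<Rightarrow> nat \<Rightarrow> vf set" where
  "hpq p q = {X. \<exists>a b c. X = lincomb p q a b c}"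

definition Imap :: "nat \<Rightarrow> nat \<Rightarrow> vf \<Rightarrow> vf" where
  "Imap p q X = (SOME Y. \<exists>a b c. X = lincomb p q a b c \<and> Y = lincomb p q (\<lambda>_. 0) (\<lambda>_. 0) c)"

text \<open>Leibniz cochains: CL^k = Hom(g^{\<otimes>k}, g), i.e. k-multilinear maps h^k \<rightarrow> h,
  represented as functions on lists of length k (only values on h^k matter).\<close>
definition CL :: "nat \<Rightarrow> nat \<Rightarrow> nat \<Rightarrow> (vf list \<Rightarrow> vf) set" where
  "CL p q k = {f. \<forall>xs. length xs = k \<and> set xs \<subseteq> hpq p q \<longrightarrow>
      f xs \<in> hpq p q \<and>
      (\<forall>i<k. \<forall>u\<in>hpq p q. \<forall>v\<in>hpq p q. \<forall>c.
          f (xs[i := vadd u (vsc c v)]) = vadd (f (xs[i := u])) (vsc c (f (xs[i := v]))))}"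

definition del :: "nat \<Rightarrow> 'a list \<Rightarrow> 'a list" where
  "del a xs = take a xs @ drop (Suc a) xs"

text \<open>Leibniz coboundary (0-based list positions; list position a is g_{a+1}).\<close>
definition cobdry :: "nat \<Rightarrow> nat \<Rightarrow> (vf list \<Rightarrow> vf) \<Rightarrow> vf list \<Rightarrow> vf" where
  "cobdry p q f xs = (\<lambda>x k.
      br p q (hd xs) (f (tl xs)) x k
    + (\<Sum>a\<in>{1..<length xs}. (-1) ^ (a + 1) * br p q (f (del a xs)) (xs ! a) x k)
    + (\<Sum>b\<in>{1..<length xs}. \<Sum>a\<in>{..<b}.
         (-1) ^ b * f (del b (xs[a := br p q (xs ! a) (xs ! b)])) x k))"

definition eq_on :: "nat \<Rightarrow> nat \<Rightarrow> nat \<Rightarrow> (vf list \<Rightarrow> vf) \<Rightarrow> (vf list \<Rightarrow> vf) \<Rightarrow> bool" where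
  "eq_on p q k f g = (\<forall>xs. length xs = k \<and> set xs \<subseteq> hpq p q \<longrightarrow> f xs = g xs)"

definition ZL :: "nat \<Rightarrow> nat \<Rightarrow> nat \<Rightarrow> (vf list \<Rightarrow> vf) set" where
  "ZL p q k = {f \<in> CL p q k. eq_on p q (Suc k) (cobdry p q f) (\<lambda>_. vzero)}"

definition BL :: "nat \<Rightarrow> nat \<Rightarrow> nat \<Rightarrow> (vf list \<Rightarrow> vf) set" where
  "BL p q k = (if k = 0 then {f \<in> CL p q 0. eq_on p q 0 f (\<lambda>_. vzero)}
     else {f \<in> CL p q k. \<exists>g\<in>CL p q (k - 1). eq_on p q k f (cobdry p q g)})"

end

theory Submission
  imports Defs
begin


definition eta :: "nat \<Rightarrow> nat \<Rightarrow> real" where "eta p k = (if k \<le> p then 1 else -1)"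
definition aff :: "nat \<Rightarrow> nat \<Rightarrow> (nat \<Rightarrow> nat \<Rightarrow> real) \<Rightarrow> (nat \<Rightarrow> real) \<Rightarrow> vf" where
  "aff p q A b = (\<lambda>x k. if k \<in> {1..p+q} then (\<Sum>l=1..p+q. A k l * x l) + b k else 0)"
definition mm :: "nat \<Rightarrow> nat \<Rightarrow> (nat \<Rightarrow> nat \<Rightarrow> real) \<Rightarrow> (nat \<Rightarrow> nat \<Rightarrow> real) \<Rightarrow> nat \<Rightarrow> nat \<Rightarrow> real"
  where "mm p q A B = (\<lambda>k l. \<Sum>r=1..p+q. A k r * B r l)"
definition mv :: "nat \<Rightarrow> nat \<Rightarrow> (nat \<Rightarrow> nat \<Rightarrow> real) \<Rightarrow> (nat \<Rightarrow> real) \<Rightarrow> nat \<Rightarrow> real"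
  where "mv p q A v = (\<lambda>k. \<Sum>r=1..p+q. A k r * v r)"
definition skew :: "nat \<Rightarrow> nat \<Rightarrow> (nat \<Rightarrow> nat \<Rightarrow> real) \<Rightarrow> bool" where
  "skew p q A \<longleftrightarrow> (\<forall>k\<in>{1..p+q}. \<forall>l\<in>{1..p+q}. eta p k * A k l = - (eta p l * A l k))"
definition G :: "nat \<Rightarrow> nat \<Rightarrow> nat \<Rightarrow> nat \<Rightarrow> nat \<Rightarrow> real" where
  "G p i j = (\<lambda>k l. if k = j \<and> l = i then 1 else if k = i \<and> l = j then - (eta p i * eta p j) else 0)"
definition ev :: "nat \<Rightarrow> nat \<Rightarrow> real" where "ev i = (\<lambda>k. if k = i then 1 else 0)"

lemma eta_sq[simp]: "eta p k * eta p k = 1" by (simp add: eta_def)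
lemma eta_nz[simp]: "eta p k \<noteq> 0" by (simp add: eta_def)

lemma sum_ev: "l \<in> {1..n} \<Longrightarrow> (\<Sum>m=1..n. A m * ev l m) = A l"
  by (simp add: ev_def if_distrib cong: if_cong)

lemma aff_eq_iff: "aff p q A b = aff p q A' b' \<longleftrightarrow>
   (\<forall>k\<in>{1..p+q}. \<forall>l\<in>{1..p+q}. A k l = A' k l) \<and> (\<forall>k\<in>{1..p+q}. b k = b' k)"
proof
  assume h: "aff p q A b = aff p q A' b'"
  have b: "b k = b' k" if "k \<in> {1..p+q}" for k
    using fun_cong[OF fun_cong[OF h, of "\<lambda>_. 0"], of k] that by (simp add: aff_def)
  moreover have "A k l = A' k l" if "k \<in> {1..p+q}" "l \<in> {1..p+q}" for k l
  proof -
    have "(\<Sum>m=1..p+q. A k m * ev l m) + b k = (\<Sum>m=1..p+q. A' k m * ev l m) + b' k"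
      using fun_cong[OF fun_cong[OF h, of "ev l"], of k] that by (simp only: aff_def if_True)
    then show ?thesis using sum_ev[OF that(2), of "\<lambda>m. A k m"] sum_ev[OF that(2), of "\<lambda>m. A' k m"] b[OF that(1)]
      by simp
  qed
  ultimately show "(\<forall>k\<in>{1..p+q}. \<forall>l\<in>{1..p+q}. A k l = A' k l) \<and> (\<forall>k\<in>{1..p+q}. b k = b' k)" by blast
next
  assume "(\<forall>k\<in>{1..p+q}. \<forall>l\<in>{1..p+q}. A k l = A' k l) \<and> (\<forall>k\<in>{1..p+q}. b k = b' k)"
  then show "aff p q A b = aff p q A' b'"
    by (auto simp: aff_def intro!: ext sum.cong)
qed

lemma deriv_aff_comp:
  assumes "l \<in> {1..p+q}"
  shows "pd l (\<lambda>y. aff p q B c y k) x = (if k \<in> {1..p+q} then B k l else 0)"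
proof (cases "k \<in> {1..p+q}")
  case False
  have h: "aff p q B c y k = 0" for y using False unfolding aff_def by auto
  show ?thesis unfolding pd_def h by (subst if_not_P[OF False]) simp
next
  case True
  let ?S = "{1..p+q}"
  have eq: "(\<lambda>t. aff p q B c (x(l := t)) k) = (\<lambda>t. B k l * t + ((\<Sum>m\<in>?S-{l}. B k m * x m) + c k))"
  proof
    fix t
    have "(\<Sum>m\<in>?S. B k m * (x(l := t)) m) = B k l * t + (\<Sum>m\<in>?S-{l}. B k m * (x(l := t)) m)"
      using assms by (simp add: sum.remove)
    also have "(\<Sum>m\<in>?S-{l}. B k m * (x(l := t)) m) = (\<Sum>m\<in>?S-{l}. B k m * x m)"
      by (rule sum.cong) auto
    finally show "aff p q B c (x(l := t)) k = B k l * t + ((\<Sum>m\<in>?S-{l}. B k m * x m) + c k)"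
      using True by (simp add: aff_def)
  qed
  have "((\<lambda>t. B k l * t + ((\<Sum>m\<in>?S-{l}. B k m * x m) + c k)) has_real_derivative B k l) (at (x l))"
    by (auto intro!: derivative_eq_intros)
  then show ?thesis using True unfolding pd_def eq by (simp add: DERIV_imp_deriv)
qed

lemma sum_swap_helper:
  fixes A :: "nat \<Rightarrow> nat \<Rightarrow> real"
  shows "(\<Sum>l\<in>S. (\<Sum>m\<in>T. A l m * x m) * B l) = (\<Sum>m\<in>T. (\<Sum>l\<in>S. B l * A l m) * x m)"
proof -
  have "(\<Sum>l\<in>S. (\<Sum>m\<in>T. A l m * x m) * B l) = (\<Sum>l\<in>S. \<Sum>m\<in>T. B l * A l m * x m)"
    apply (rule sum.cong, rule refl)
    apply (subst sum_distrib_right)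
    apply (rule sum.cong, rule refl)
    by (simp add: mult_ac)
  also have "\<dots> = (\<Sum>m\<in>T. \<Sum>l\<in>S. B l * A l m * x m)" by (rule sum.swap)
  also have "\<dots> = (\<Sum>m\<in>T. (\<Sum>l\<in>S. B l * A l m) * x m)" by (simp add: sum_distrib_right)
  finally show ?thesis .
qed

lemma br_aff:
  "br p q (aff p q A b) (aff p q B c) = aff p q (\<lambda>k l. mm p q B A k l - mm p q A B k l) (\<lambda>k. mv p q B b k - mv p q A c k)"
proof (intro ext)
  fix x k
  let ?S = "{1..p+q}"
  show "br p q (aff p q A b) (aff p q B c) x k = aff p q (\<lambda>k l. mm p q B A k l - mm p q A B k l) (\<lambda>k. mv p q B b k - mv p q A c k) x k"
  proof (cases "k \<in> ?S")
    case False
    have "br p q (aff p q A b) (aff p q B c) x k = 0"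
      unfolding br_def by (rule sum.neutral) (use False in \<open>auto simp: deriv_aff_comp\<close>)
    then show ?thesis using False unfolding aff_def by auto
  next
    case True
    have "br p q (aff p q A b) (aff p q B c) x k = (\<Sum>l\<in>?S. aff p q A b x l * B k l - aff p q B c x l * A k l)"
      unfolding br_def using True by (intro sum.cong) (auto simp: deriv_aff_comp)
    also have "\<dots> = (\<Sum>l\<in>?S. ((\<Sum>m\<in>?S. A l m * x m) + b l) * B k l - ((\<Sum>m\<in>?S. B l m * x m) + c l) * A k l)"
      by (intro sum.cong) (auto simp: aff_def)
    also have "\<dots> = (\<Sum>m\<in>?S. (\<Sum>l\<in>?S. B k l * A l m) * x m) + (\<Sum>l\<in>?S. B k l * b l)
        - ((\<Sum>m\<in>?S. (\<Sum>l\<in>?S. A k l * B l m) * x m) + (\<Sum>l\<in>?S. A k l * c l))"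
    proof -
      have e1: "(\<Sum>l\<in>?S. ((\<Sum>m\<in>?S. A l m * x m) + b l) * B k l - ((\<Sum>m\<in>?S. B l m * x m) + c l) * A k l)
        = (\<Sum>l\<in>?S. (\<Sum>m\<in>?S. A l m * x m) * B k l) + (\<Sum>l\<in>?S. B k l * b l)
          - ((\<Sum>l\<in>?S. (\<Sum>m\<in>?S. B l m * x m) * A k l) + (\<Sum>l\<in>?S. A k l * c l))"
        by (simp add: sum_subtractf sum.distrib algebra_simps)
      show ?thesis unfolding e1 sum_swap_helper ..
    qed
    also have "\<dots> = aff p q (\<lambda>k l. mm p q B A k l - mm p q A B k l) (\<lambda>k. mv p q B b k - mv p q A c k) x k"
      using True by (simp add: aff_def mm_def mv_def algebra_simps sum_subtractf)
    finally show ?thesis .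
  qed
qed


lemma mv_G:
  assumes "i \<in> {1..p+q}" "j \<in> {1..p+q}" "i \<noteq> j"
  shows "mv p q (G p i j) v m = (if m = j then v i else if m = i then - (eta p i * eta p j) * v j else 0)"
proof -
  consider "m = j" | "m = i" | "m \<noteq> i" "m \<noteq> j" by blast
  then show ?thesis
  proof cases
    case 1
    then have "mv p q (G p i j) v m = (\<Sum>r=1..p+q. if r = i then v r else 0)"
      using assms(3) unfolding mv_def G_def by (intro sum.cong) auto
    then show ?thesis using 1 assms by simp
  next
    case 2
    then have "mv p q (G p i j) v m = (\<Sum>r=1..p+q. if r = j then - (eta p i * eta p j) * v r else 0)"
      using assms(3) unfolding mv_def G_def by (intro sum.cong) auto
    then show ?thesis using 2 assms by simp
  next
    case 3
    then have "mv p q (G p i j) v m = (\<Sum>r=1..p+q. 0)"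
      unfolding mv_def G_def by (intro sum.cong) auto
    then show ?thesis using 3 by simp
  qed
qed

lemma mm_G_left:
  assumes "i \<in> {1..p+q}" "j \<in> {1..p+q}" "i \<noteq> j"
  shows "mm p q (G p i j) B m l = (if m = j then B i l else if m = i then - (eta p i * eta p j) * B j l else 0)"
  using mv_G[OF assms, of "\<lambda>r. B r l" m] by (simp add: mm_def mv_def)

lemma mm_G_right:
  assumes "i \<in> {1..p+q}" "j \<in> {1..p+q}" "i \<noteq> j"
  shows "mm p q B (G p i j) m l = (if l = i then B m j else if l = j then - (eta p i * eta p j) * B m i else 0)"
proof -
  consider "l = i" | "l = j" | "l \<noteq> i" "l \<noteq> j" by blast
  then show ?thesis
  proof cases
    case 1
    then have "mm p q B (G p i j) m l = (\<Sum>r=1..p+q. if r = j then B m r else 0)"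
      using assms(3) unfolding mm_def G_def by (intro sum.cong) auto
    then show ?thesis using 1 assms by simp
  next
    case 2
    then have "mm p q B (G p i j) m l = (\<Sum>r=1..p+q. if r = i then - (eta p i * eta p j) * B m r else 0)"
      using assms(3) unfolding mm_def G_def by (intro sum.cong) auto
    then show ?thesis using 2 assms by simp
  next
    case 3
    then have "mm p q B (G p i j) m l = (\<Sum>r=1..p+q. 0)"
      unfolding mm_def G_def by (intro sum.cong) auto
    then show ?thesis using 3 by simp
  qed
qed

lemma skew_G: "i \<noteq> j \<Longrightarrow> skew p q (G p i j)"
  by (auto simp: skew_def G_def algebra_simps)

lemma vadd_aff: "vadd (aff p q A b) (vsc c (aff p q B d)) = aff p q (\<lambda>k l. A k l + c * B k l) (\<lambda>k. b k + c * d k)"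
  by (auto simp: vadd_def vsc_def aff_def algebra_simps sum.distrib sum_distrib_left intro!: ext)

lemma aff_out: "k \<notin> {1..p+q} \<Longrightarrow> aff p q A b x k = 0"
  by (simp only: aff_def if_not_P if_False)

lemma vsum_aff:
  "(\<lambda>x k. \<Sum>s\<in>S. w s * aff p q (M s) (v s) x k) = aff p q (\<lambda>k l. \<Sum>s\<in>S. w s * M s k l) (\<lambda>k. \<Sum>s\<in>S. w s * v s k)"
proof (intro ext)
  fix x k
  show "(\<Sum>s\<in>S. w s * aff p q (M s) (v s) x k) = aff p q (\<lambda>k l. \<Sum>s\<in>S. w s * M s k l) (\<lambda>k. \<Sum>s\<in>S. w s * v s k) x k"
  proof (cases "k \<in> {1..p+q}")
    case True
    have "(\<Sum>s\<in>S. w s * aff p q (M s) (v s) x k) = (\<Sum>s\<in>S. (\<Sum>l=1..p+q. w s * M s k l * x l) + w s * v s k)"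
      using True by (auto simp: aff_def algebra_simps sum_distrib_left intro!: sum.cong)
    also have "\<dots> = (\<Sum>l=1..p+q. \<Sum>s\<in>S. w s * M s k l * x l) + (\<Sum>s\<in>S. w s * v s k)"
      by (simp add: sum.distrib sum.swap[of _ S])
    also have "\<dots> = aff p q (\<lambda>k l. \<Sum>s\<in>S. w s * M s k l) (\<lambda>k. \<Sum>s\<in>S. w s * v s k) x k"
      using True by (simp add: aff_def sum_distrib_right)
    finally show ?thesis .
  qed (simp add: aff_out)
qed

lemma alpha_aff: "(i,j) \<in> Aidx p q \<Longrightarrow> alpha i j = aff p q (G p i j) (\<lambda>_. 0)"
  apply (rule ext)+
  subgoal for x k
    using mv_G[of i p q j x k]
    by (auto simp: alpha_def aff_def Aidx_def eta_def mv_def)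
  done

lemma beta_aff: "(i,j) \<in> Bidx p q \<Longrightarrow> beta i j = aff p q (G p i j) (\<lambda>_. 0)"
  apply (rule ext)+
  subgoal for x k
    using mv_G[of i p q j x k]
    by (auto simp: beta_def aff_def Bidx_def eta_def mv_def)
  done

lemma part_aff: "i \<in> {1..p+q} \<Longrightarrow> part i = aff p q (\<lambda>_ _. 0) (ev i)"
  by (auto simp: part_def aff_def ev_def intro!: ext)



definition Amat :: "nat \<Rightarrow> nat \<Rightarrow> (nat \<times> nat \<Rightarrow> real) \<Rightarrow> (nat \<times> nat \<Rightarrow> real) \<Rightarrow> nat \<Rightarrow> nat \<Rightarrow> real" where
  "Amat p q a b = (\<lambda>k l. (\<Sum>s\<in>Aidx p q. a s * G p (fst s) (snd s) k l) + (\<Sum>s\<in>Bidx p q. b s * G p (fst s) (snd s) k l))"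

lemma finite_Aidx: "finite (Aidx p q)"
  by (rule finite_subset[of _ "{1..p+q} \<times> {1..p+q}"]) (auto simp: Aidx_def)
lemma finite_Bidx: "finite (Bidx p q)"
  by (rule finite_subset[of _ "{1..p+q} \<times> {1..p+q}"]) (auto simp: Bidx_def)

lemma aff_add: "aff p q A b x k + aff p q A' b' x k = aff p q (\<lambda>k l. A k l + A' k l) (\<lambda>k. b k + b' k) x k"
  by (simp add: aff_def sum.distrib algebra_simps)

lemma sum_ev2: "k \<in> {1..n} \<Longrightarrow> (\<Sum>i=1..n. c i * ev i k) = c k"
proof -
  assume k: "k \<in> {1..n}"
  have "(\<Sum>i=1..n. c i * ev i k) = (\<Sum>i=1..n. if k = i then c i else 0)"
    by (rule sum.cong) (auto simp: ev_def)
  then show ?thesis using k by simp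
qed

lemma lincomb_aff: "lincomb p q a b c = aff p q (Amat p q a b) c"
proof (intro ext)
  fix x k
  have e1: "(\<Sum>(i,j)\<in>Aidx p q. a (i,j) * alpha i j x k) = (\<Sum>s\<in>Aidx p q. a s * aff p q (G p (fst s) (snd s)) (\<lambda>_. 0) x k)"
    by (intro sum.cong) (auto simp: alpha_aff split: prod.splits)
  also have "\<dots> = aff p q (\<lambda>k l. \<Sum>s\<in>Aidx p q. a s * G p (fst s) (snd s) k l) (\<lambda>k. \<Sum>s\<in>Aidx p q. a s * 0) x k"
    by (rule fun_cong[OF fun_cong[OF vsum_aff]])
  finally have e1: "(\<Sum>(i,j)\<in>Aidx p q. a (i,j) * alpha i j x k) = aff p q (\<lambda>k l. \<Sum>s\<in>Aidx p q. a s * G p (fst s) (snd s) k l) (\<lambda>k. 0) x k"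
    by simp
  have e2: "(\<Sum>(i,j)\<in>Bidx p q. b (i,j) * beta i j x k) = (\<Sum>s\<in>Bidx p q. b s * aff p q (G p (fst s) (snd s)) (\<lambda>_. 0) x k)"
    by (intro sum.cong) (auto simp: beta_aff split: prod.splits)
  also have "\<dots> = aff p q (\<lambda>k l. \<Sum>s\<in>Bidx p q. b s * G p (fst s) (snd s) k l) (\<lambda>k. \<Sum>s\<in>Bidx p q. b s * 0) x k"
    by (rule fun_cong[OF fun_cong[OF vsum_aff]])
  finally have e2: "(\<Sum>(i,j)\<in>Bidx p q. b (i,j) * beta i j x k) = aff p q (\<lambda>k l. \<Sum>s\<in>Bidx p q. b s * G p (fst s) (snd s) k l) (\<lambda>k. 0) x k"
    by simp
  have e3: "(\<Sum>i=1..p+q. c i * part i x k) = (\<Sum>i\<in>{1..p+q}. c i * aff p q (\<lambda>_ _. 0) (ev i) x k)"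
    by (intro sum.cong) (auto simp: part_aff)
  also have "\<dots> = aff p q (\<lambda>k l. \<Sum>i\<in>{1..p+q}. c i * 0) (\<lambda>k. \<Sum>i\<in>{1..p+q}. c i * ev i k) x k"
    by (rule fun_cong[OF fun_cong[OF vsum_aff]])
  finally have e3: "(\<Sum>i=1..p+q. c i * part i x k) = aff p q (\<lambda>k l. 0) (\<lambda>k. \<Sum>i\<in>{1..p+q}. c i * ev i k) x k"
    by simp
  have "lincomb p q a b c x k = aff p q (Amat p q a b) (\<lambda>k. \<Sum>i\<in>{1..p+q}. c i * ev i k) x k"
    unfolding lincomb_def e1 e2 e3 aff_add by (simp add: Amat_def)
  also have "\<dots> = aff p q (Amat p q a b) c x k"
    by (rule fun_cong[OF fun_cong[of _ _ x]], subst aff_eq_iff) (auto simp: ev_def if_distrib cong: if_cong)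
  finally show "lincomb p q a b c x k = aff p q (Amat p q a b) c x k" .
qed

lemma skew_sum:
  assumes "\<And>s. s \<in> S \<Longrightarrow> skew p q (M s)"
  shows "skew p q (\<lambda>k l. \<Sum>s\<in>S. w s * M s k l)"
  unfolding skew_def
proof (intro ballI)
  fix k l assume k: "k \<in> {1..p+q}" and l: "l \<in> {1..p+q}"
  have "eta p k * (\<Sum>s\<in>S. w s * M s k l) = (\<Sum>s\<in>S. w s * (eta p k * M s k l))"
    by (simp add: sum_distrib_left mult_ac)
  also have "\<dots> = (\<Sum>s\<in>S. w s * - (eta p l * M s l k))"
  proof (rule sum.cong[OF refl])
    fix s assume "s \<in> S"
    then have "skew p q (M s)" by (rule assms)
    then have h: "eta p k * M s k l = - (eta p l * M s l k)" using k l unfolding skew_def by blast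
    show "w s * (eta p k * M s k l) = w s * - (eta p l * M s l k)" unfolding h ..
  qed
  also have "\<dots> = - (eta p l * (\<Sum>s\<in>S. w s * M s l k))"
    by (simp add: sum_distrib_left sum_negf mult_ac)
  finally show "eta p k * (\<Sum>s\<in>S. w s * M s k l) = - (eta p l * (\<Sum>s\<in>S. w s * M s l k))" .
qed

lemma skew_lin: "skew p q A \<Longrightarrow> skew p q B \<Longrightarrow> skew p q (\<lambda>k l. A k l + c * B k l)"
  unfolding skew_def
proof (intro ballI)
  fix k l assume a: "\<forall>k\<in>{1..p+q}. \<forall>l\<in>{1..p+q}. eta p k * A k l = - (eta p l * A l k)"
    and b: "\<forall>k\<in>{1..p+q}. \<forall>l\<in>{1..p+q}. eta p k * B k l = - (eta p l * B l k)"
    and k: "k \<in> {1..p+q}" and l: "l \<in> {1..p+q}"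
  have "eta p k * (A k l + c * B k l) = eta p k * A k l + c * (eta p k * B k l)" by (simp add: algebra_simps)
  also have "\<dots> = - (eta p l * A l k) + c * - (eta p l * B l k)"
  proof -
    have h1: "eta p k * A k l = - (eta p l * A l k)" using a k l by blast
    have h2: "eta p k * B k l = - (eta p l * B l k)" using b k l by blast
    show ?thesis unfolding h1 h2 ..
  qed
  also have "\<dots> = - (eta p l * (A l k + c * B l k))" by (simp add: algebra_simps)
  finally show "eta p k * (A k l + c * B k l) = - (eta p l * (A l k + c * B l k))" .
qed

lemma skew_add: "skew p q A \<Longrightarrow> skew p q B \<Longrightarrow> skew p q (\<lambda>k l. A k l + B k l)"
  using skew_lin[of p q A B 1] by simp

lemma skew_Amat: "skew p q (Amat p q a b)"
  unfolding Amat_def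
  by (intro skew_add skew_sum skew_G) (auto simp: Aidx_def Bidx_def)

lemma G_split: "i \<noteq> j \<Longrightarrow> G p i j k l = (if (i,j) = (l,k) then 1 else 0) + (if (i,j) = (k,l) then - (eta p i * eta p j) else 0)"
  by (auto simp: G_def)

lemma sum_two_delta:
  fixes f g :: "'a \<Rightarrow> real"
  assumes "finite S"
  shows "(\<Sum>s\<in>S. f s * ((if s = t then 1 else 0) + (if s = u then g s else 0))) =
    (if t \<in> S then f t else 0) + (if u \<in> S then f u * g u else 0)"
proof -
  have "(\<Sum>s\<in>S. f s * ((if s = t then 1 else 0) + (if s = u then g s else 0))) =
     (\<Sum>s\<in>S. if s = t then f s else 0) + (\<Sum>s\<in>S. if s = u then f s * g s else 0)"
    unfolding sum.distrib[symmetric] by (rule sum.cong) (auto simp: algebra_simps)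
  then show ?thesis using assms by simp
qed

lemma skew_diag: "skew p q A \<Longrightarrow> k \<in> {1..p+q} \<Longrightarrow> A k k = 0"
proof -
  assume "skew p q A" "k \<in> {1..p+q}"
  then have "eta p k * A k k = - (eta p k * A k k)" unfolding skew_def by blast
  then have "eta p k * A k k = 0" by linarith
  then show "A k k = 0" by simp
qed

lemma skew_flip: "skew p q A \<Longrightarrow> k \<in> {1..p+q} \<Longrightarrow> l \<in> {1..p+q} \<Longrightarrow> A l k * - (eta p k * eta p l) = A k l"
proof -
  assume "skew p q A" "k \<in> {1..p+q}" "l \<in> {1..p+q}"
  then have h: "eta p k * A k l = - (eta p l * A l k)" unfolding skew_def by blast
  have "A k l = (eta p k * eta p k) * A k l" by simp
  also have "\<dots> = eta p k * (eta p k * A k l)" by (rule mult.assoc)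
  finally have "A k l = eta p k * (eta p k * A k l)" .
  also have "\<dots> = A l k * - (eta p k * eta p l)" unfolding h by (simp add: algebra_simps)
  finally show ?thesis by simp
qed

lemma memA: "k \<in> {1..p+q} \<Longrightarrow> l \<in> {1..p+q} \<Longrightarrow> ((l,k) \<in> Aidx p q) = (l < k \<and> (k \<le> p \<or> p < l))"
  by (auto simp: Aidx_def)
lemma memB: "k \<in> {1..p+q} \<Longrightarrow> l \<in> {1..p+q} \<Longrightarrow> ((l,k) \<in> Bidx p q) = (l \<le> p \<and> p < k)"
  by (auto simp: Bidx_def)

lemma Amat_skew_eq:
  assumes sk: "skew p q A" and k: "k \<in> {1..p+q}" and l: "l \<in> {1..p+q}"
  shows "Amat p q (\<lambda>s. A (snd s) (fst s)) (\<lambda>s. A (snd s) (fst s)) k l = A k l"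
proof -
  have ga: "(\<Sum>s\<in>Aidx p q. A (snd s) (fst s) * G p (fst s) (snd s) k l)
     = (\<Sum>s\<in>Aidx p q. A (snd s) (fst s) * ((if s = (l,k) then 1 else 0) + (if s = (k,l) then - (eta p (fst s) * eta p (snd s)) else 0)))"
  proof (rule sum.cong[OF refl])
    fix s assume s: "s \<in> Aidx p q"
    obtain i j where ij: "s = (i,j)" by (cases s)
    then have "i \<noteq> j" using s by (auto simp: Aidx_def)
    then show "A (snd s) (fst s) * G p (fst s) (snd s) k l = A (snd s) (fst s) * ((if s = (l,k) then 1 else 0) + (if s = (k,l) then - (eta p (fst s) * eta p (snd s)) else 0))"
      unfolding ij fst_conv snd_conv by (subst G_split) auto
  qed
  have gb: "(\<Sum>s\<in>Bidx p q. A (snd s) (fst s) * G p (fst s) (snd s) k l)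
     = (\<Sum>s\<in>Bidx p q. A (snd s) (fst s) * ((if s = (l,k) then 1 else 0) + (if s = (k,l) then - (eta p (fst s) * eta p (snd s)) else 0)))"
  proof (rule sum.cong[OF refl])
    fix s assume s: "s \<in> Bidx p q"
    obtain i j where ij: "s = (i,j)" by (cases s)
    then have "i \<noteq> j" using s by (auto simp: Bidx_def)
    then show "A (snd s) (fst s) * G p (fst s) (snd s) k l = A (snd s) (fst s) * ((if s = (l,k) then 1 else 0) + (if s = (k,l) then - (eta p (fst s) * eta p (snd s)) else 0))"
      unfolding ij fst_conv snd_conv by (subst G_split) auto
  qed
  have fl: "A l k * - (eta p k * eta p l) = A k l" by (rule skew_flip[OF sk k l])
  have d: "A k k = 0" by (rule skew_diag[OF sk k])
  have e: "Amat p q (\<lambda>s. A (snd s) (fst s)) (\<lambda>s. A (snd s) (fst s)) k l =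
     (if l < k \<and> (k \<le> p \<or> p < l) then A k l else 0) + (if k < l \<and> (l \<le> p \<or> p < k) then A k l else 0)
   + ((if l \<le> p \<and> p < k then A k l else 0) + (if k \<le> p \<and> p < l then A k l else 0))"
    unfolding Amat_def ga gb sum_two_delta[OF finite_Aidx] sum_two_delta[OF finite_Bidx]
      memA[OF k l] memA[OF l k] memB[OF k l] memB[OF l k] fst_conv snd_conv fl ..
  consider "k = l" | "k < l" "k \<le> p" "l \<le> p" | "k < l" "k \<le> p" "\<not> l \<le> p" | "k < l" "\<not> k \<le> p"
    | "l < k" "l \<le> p" "k \<le> p" | "l < k" "l \<le> p" "\<not> k \<le> p" | "l < k" "\<not> l \<le> p"
    by linarith
  note cs = this
  have d2: "A l l = 0" by (rule skew_diag[OF sk l])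
  from cs show ?thesis unfolding e by cases (simp_all add: d d2)
qed




lemma hpq_char: "X \<in> hpq p q \<longleftrightarrow> (\<exists>A b. skew p q A \<and> X = aff p q A b)"
proof
  assume "X \<in> hpq p q"
  then obtain a b c where "X = lincomb p q a b c" by (auto simp: hpq_def)
  then show "\<exists>A b. skew p q A \<and> X = aff p q A b" using skew_Amat lincomb_aff by metis
next
  assume "\<exists>A b. skew p q A \<and> X = aff p q A b"
  then obtain A b where sk: "skew p q A" and X: "X = aff p q A b" by blast
  have "lincomb p q (\<lambda>s. A (snd s) (fst s)) (\<lambda>s. A (snd s) (fst s)) b = aff p q A b"
    unfolding lincomb_aff aff_eq_iff using Amat_skew_eq[OF sk] by auto
  then have "\<exists>a b' c. aff p q A b = lincomb p q a b' c" by metis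
  then show "X \<in> hpq p q" by (simp add: hpq_def X)
qed

lemma aff_in_hpq: "skew p q A \<Longrightarrow> aff p q A b \<in> hpq p q"
  using hpq_char by blast

lemma Imap_aff:
  assumes "skew p q A"
  shows "Imap p q (aff p q A b) = aff p q (\<lambda>_ _. 0) b"
proof -
  let ?P = "\<lambda>Y. \<exists>a b' c. aff p q A b = lincomb p q a b' c \<and> Y = lincomb p q (\<lambda>_. 0) (\<lambda>_. 0) c"
  have ex: "\<exists>Y. ?P Y" using aff_in_hpq[OF assms, of b] by (auto simp: hpq_def)
  obtain a b' c where h: "aff p q A b = lincomb p q a b' c" and Y: "Imap p q (aff p q A b) = lincomb p q (\<lambda>_. 0) (\<lambda>_. 0) c"
    using someI_ex[OF ex] unfolding Imap_def by blast
  have "\<forall>k\<in>{1..p+q}. b k = c k" using h unfolding lincomb_aff aff_eq_iff by blast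
  then show ?thesis unfolding Y lincomb_aff aff_eq_iff by (simp add: Amat_def)
qed



definition linF :: "nat \<Rightarrow> nat \<Rightarrow> (vf \<Rightarrow> vf) \<Rightarrow> bool" where
  "linF p q F \<longleftrightarrow> (\<forall>u\<in>hpq p q. \<forall>v\<in>hpq p q. \<forall>c. F (vadd u (vsc c v)) = vadd (F u) (vsc c (F v)))"

definition derF :: "nat \<Rightarrow> nat \<Rightarrow> (vf \<Rightarrow> vf) \<Rightarrow> bool" where
  "derF p q F \<longleftrightarrow> linF p q F \<and> (\<forall>X\<in>hpq p q. F X \<in> hpq p q) \<and>
     (\<forall>X\<in>hpq p q. \<forall>Y\<in>hpq p q. F (br p q X Y) = vadd (br p q (F X) Y) (br p q X (F Y)))"

definition Mt :: "vf \<Rightarrow> nat \<Rightarrow> nat \<Rightarrow> real" where "Mt X = (\<lambda>k l. X (ev l) k - X (\<lambda>_. 0) k)"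
definition Vt :: "vf \<Rightarrow> nat \<Rightarrow> real" where "Vt X = (\<lambda>k. X (\<lambda>_. 0) k)"

lemma vzero_aff: "vzero = aff p q (\<lambda>_ _. 0) (\<lambda>_. 0)"
  by (auto simp: vzero_def aff_def intro!: ext)

lemma skew_zero: "skew p q (\<lambda>_ _. 0)" by (simp add: skew_def)

lemma vzero_hpq: "vzero \<in> hpq p q"
  by (metis aff_in_hpq skew_zero vzero_aff)

lemma Mt_aff: "k \<in> {1..p+q} \<Longrightarrow> l \<in> {1..p+q} \<Longrightarrow> Mt (aff p q A b) k l = A k l"
  using sum_ev[of l "p+q" "\<lambda>m. A k m"] by (simp add: Mt_def aff_def)

lemma Vt_aff: "k \<in> {1..p+q} \<Longrightarrow> Vt (aff p q A b) k = b k"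
  by (simp add: Vt_def aff_def)

lemma rep:
  assumes "X \<in> hpq p q"
  shows "skew p q (Mt X) \<and> X = aff p q (Mt X) (Vt X)"
proof -
  obtain A b where sk: "skew p q A" and X: "X = aff p q A b" using assms hpq_char by blast
  have eq: "aff p q A b = aff p q (Mt X) (Vt X)"
    unfolding aff_eq_iff X by (simp add: Mt_aff Vt_aff)
  have "skew p q (Mt X)" unfolding skew_def
  proof (intro ballI)
    fix k l assume k: "k \<in> {1..p+q}" and l: "l \<in> {1..p+q}"
    have "eta p k * A k l = - (eta p l * A l k)" using sk k l unfolding skew_def by blast
    then show "eta p k * Mt X k l = - (eta p l * Mt X l k)" unfolding X Mt_aff[OF k l] Mt_aff[OF l k] .
  qed
  then show ?thesis by (rule conjI[OF _ trans[OF X eq]])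
qed

lemma hpq_lin: "u \<in> hpq p q \<Longrightarrow> v \<in> hpq p q \<Longrightarrow> vadd u (vsc c v) \<in> hpq p q"
proof -
  assume u: "u \<in> hpq p q" and v: "v \<in> hpq p q"
  have "vadd u (vsc c v) = vadd (aff p q (Mt u) (Vt u)) (vsc c (aff p q (Mt v) (Vt v)))"
    using rep[OF u] rep[OF v] by simp
  also have "\<dots> = aff p q (\<lambda>k l. Mt u k l + c * Mt v k l) (\<lambda>k. Vt u k + c * Vt v k)" by (rule vadd_aff)
  finally show ?thesis using rep[OF u] rep[OF v] by (simp add: aff_in_hpq skew_lin)
qed

lemma vadd_vzero_sc: "vadd vzero (vsc c v) = vsc c v"
  by (simp add: vadd_def vzero_def vsc_def)
lemma vsc_one: "vsc 1 v = v"
  by (simp add: vsc_def)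

lemma linF_zero:
  assumes "linF p q F" shows "F vzero = vzero"
proof -
  have "vadd vzero (vsc 1 vzero) = vzero" by (simp add: vadd_def vsc_def vzero_def)
  then have "F vzero = F (vadd vzero (vsc 1 vzero))" by simp
  also have "\<dots> = vadd (F vzero) (vsc 1 (F vzero))" using assms vzero_hpq unfolding linF_def by blast
  finally have h: "F vzero = vadd (F vzero) (F vzero)" by (simp add: vsc_one)
  show ?thesis
  proof (intro ext)
    fix x k
    have "F vzero x k = F vzero x k + F vzero x k" using fun_cong[OF fun_cong[OF h, of x], of k] by (simp add: vadd_def)
    then show "F vzero x k = vzero x k" by (simp add: vzero_def)
  qed
qed

lemma linF_sc:
  assumes "linF p q F" "v \<in> hpq p q" shows "F (vsc c v) = vsc c (F v)"
proof -
  have "F (vsc c v) = F (vadd vzero (vsc c v))" by (simp add: vadd_vzero_sc)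
  also have "\<dots> = vadd (F vzero) (vsc c (F v))" using assms vzero_hpq unfolding linF_def by blast
  finally show ?thesis by (simp add: linF_zero[OF assms(1)] vadd_vzero_sc)
qed

lemma linF_add:
  assumes "linF p q F" "u \<in> hpq p q" "v \<in> hpq p q" shows "F (vadd u v) = vadd (F u) (F v)"
  using assms unfolding linF_def by (metis vsc_one)

lemma linF_sum:
  assumes "linF p q F" "finite S"
  shows "(\<forall>s\<in>S. Y s \<in> hpq p q) \<longrightarrow> (\<lambda>x k. \<Sum>s\<in>S. w s * Y s x k) \<in> hpq p q
     \<and> F (\<lambda>x k. \<Sum>s\<in>S. w s * Y s x k) = (\<lambda>x k. \<Sum>s\<in>S. w s * F (Y s) x k)"
  using assms(2)
proof (induction S rule: finite_induct)
  case empty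
  have "(\<lambda>x k. \<Sum>s\<in>{}. w s * Y s x k) = vzero" by (simp add: vzero_def)
  moreover have "(\<lambda>x k. \<Sum>s\<in>{}. w s * F (Y s) x k) = vzero" by (simp add: vzero_def)
  ultimately show ?case using vzero_hpq linF_zero[OF assms(1)] by simp
next
  case (insert a S)
  show ?case
  proof
    assume h: "\<forall>s\<in>insert a S. Y s \<in> hpq p q"
    then have IH: "(\<lambda>x k. \<Sum>s\<in>S. w s * Y s x k) \<in> hpq p q \<and> F (\<lambda>x k. \<Sum>s\<in>S. w s * Y s x k) = (\<lambda>x k. \<Sum>s\<in>S. w s * F (Y s) x k)"
      using insert by blast
    have Ya: "Y a \<in> hpq p q" using h by blast
    have e1: "(\<lambda>x k. \<Sum>s\<in>insert a S. w s * Y s x k) = vadd (\<lambda>x k. \<Sum>s\<in>S. w s * Y s x k) (vsc (w a) (Y a))"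
      using insert by (simp add: vadd_def vsc_def add.commute)
    have e2: "(\<lambda>x k. \<Sum>s\<in>insert a S. w s * F (Y s) x k) = vadd (\<lambda>x k. \<Sum>s\<in>S. w s * F (Y s) x k) (vsc (w a) (F (Y a)))"
      using insert by (simp add: vadd_def vsc_def add.commute)
    show "(\<lambda>x k. \<Sum>s\<in>insert a S. w s * Y s x k) \<in> hpq p q \<and>
      F (\<lambda>x k. \<Sum>s\<in>insert a S. w s * Y s x k) = (\<lambda>x k. \<Sum>s\<in>insert a S. w s * F (Y s) x k)"
      unfolding e1 e2 using IH Ya hpq_lin assms(1) unfolding linF_def by simp
  qed
qed

lemma alpha_hpq: assumes "(i,j) \<in> Aidx p q" shows "alpha i j \<in> hpq p q"
proof -
  have "i \<noteq> j" using assms by (auto simp: Aidx_def)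
  then show ?thesis unfolding alpha_aff[OF assms] by (rule aff_in_hpq[OF skew_G])
qed
lemma beta_hpq: assumes "(i,j) \<in> Bidx p q" shows "beta i j \<in> hpq p q"
proof -
  have "i \<noteq> j" using assms by (auto simp: Bidx_def)
  then show ?thesis unfolding beta_aff[OF assms] by (rule aff_in_hpq[OF skew_G])
qed
lemma part_hpq: assumes "i \<in> {1..p+q}" shows "part i \<in> hpq p q"
  unfolding part_aff[OF assms] by (rule aff_in_hpq[OF skew_zero])

lemma lin_agree:
  assumes F: "linF p q F" and H: "linF p q H"
    and ea: "\<And>i j. (i,j) \<in> Aidx p q \<Longrightarrow> F (alpha i j) = H (alpha i j)"
    and eb: "\<And>i j. (i,j) \<in> Bidx p q \<Longrightarrow> F (beta i j) = H (beta i j)"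
    and ec: "\<And>i. i \<in> {1..p+q} \<Longrightarrow> F (part i) = H (part i)"
    and X: "X \<in> hpq p q"
  shows "F X = H X"
proof -
  obtain a b c where Xl: "X = lincomb p q a b c" using X by (auto simp: hpq_def)
  let ?SA = "\<lambda>x k. \<Sum>s\<in>Aidx p q. a s * alpha (fst s) (snd s) x k"
  let ?SB = "\<lambda>x k. \<Sum>s\<in>Bidx p q. b s * beta (fst s) (snd s) x k"
  let ?SC = "\<lambda>x k. \<Sum>s\<in>{1..p+q}. c s * part s x k"
  have X2: "X = vadd (vadd ?SA (vsc 1 ?SB)) (vsc 1 ?SC)"
    unfolding Xl lincomb_def vadd_def vsc_def by (simp add: case_prod_beta')
  have hA: "\<forall>s\<in>Aidx p q. alpha (fst s) (snd s) \<in> hpq p q" using alpha_hpq by auto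
  have hB: "\<forall>s\<in>Bidx p q. beta (fst s) (snd s) \<in> hpq p q" using beta_hpq by auto
  have hC: "\<forall>s\<in>{1..p+q}. part s \<in> hpq p q" using part_hpq by auto
  note sA = linF_sum[OF F finite_Aidx, where Y="\<lambda>s. alpha (fst s) (snd s)" and w=a, THEN mp, OF hA]
  note sB = linF_sum[OF F finite_Bidx, where Y="\<lambda>s. beta (fst s) (snd s)" and w=b, THEN mp, OF hB]
  note sC = linF_sum[OF F finite_atLeastAtMost, where Y="part" and w=c, THEN mp, OF hC]
  note tA = linF_sum[OF H finite_Aidx, where Y="\<lambda>s. alpha (fst s) (snd s)" and w=a, THEN mp, OF hA]
  note tB = linF_sum[OF H finite_Bidx, where Y="\<lambda>s. beta (fst s) (snd s)" and w=b, THEN mp, OF hB]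
  note tC = linF_sum[OF H finite_atLeastAtMost, where Y="part" and w=c, THEN mp, OF hC]
  have AB: "vadd ?SA (vsc 1 ?SB) \<in> hpq p q" using sA sB hpq_lin by blast
  have la: "G (vadd u (vsc c v)) = vadd (G u) (vsc c (G v))" if "linF p q G" "u \<in> hpq p q" "v \<in> hpq p q" for G u v c
    using that unfolding linF_def by blast
  have "F X = vadd (vadd (F ?SA) (vsc 1 (F ?SB))) (vsc 1 (F ?SC))"
    unfolding X2 la[OF F AB conjunct1[OF sC]] la[OF F conjunct1[OF sA] conjunct1[OF sB]] ..
  moreover have "H X = vadd (vadd (H ?SA) (vsc 1 (H ?SB))) (vsc 1 (H ?SC))"
    unfolding X2 la[OF H AB conjunct1[OF sC]] la[OF H conjunct1[OF sA] conjunct1[OF sB]] ..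
  moreover have "F ?SA = H ?SA"
  proof -
    have "(\<lambda>x k. \<Sum>s\<in>Aidx p q. a s * F (alpha (fst s) (snd s)) x k) = (\<lambda>x k. \<Sum>s\<in>Aidx p q. a s * H (alpha (fst s) (snd s)) x k)"
    proof (intro ext sum.cong refl)
      fix x k s assume "s \<in> Aidx p q"
      then have "F (alpha (fst s) (snd s)) = H (alpha (fst s) (snd s))" by (intro ea) simp
      then show "a s * F (alpha (fst s) (snd s)) x k = a s * H (alpha (fst s) (snd s)) x k" by simp
    qed
    then show ?thesis using conjunct2[OF sA] conjunct2[OF tA] by simp
  qed
  moreover have "F ?SB = H ?SB"
  proof -
    have "(\<lambda>x k. \<Sum>s\<in>Bidx p q. b s * F (beta (fst s) (snd s)) x k) = (\<lambda>x k. \<Sum>s\<in>Bidx p q. b s * H (beta (fst s) (snd s)) x k)"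
    proof (intro ext sum.cong refl)
      fix x k s assume "s \<in> Bidx p q"
      then have "F (beta (fst s) (snd s)) = H (beta (fst s) (snd s))" by (intro eb) simp
      then show "b s * F (beta (fst s) (snd s)) x k = b s * H (beta (fst s) (snd s)) x k" by simp
    qed
    then show ?thesis using conjunct2[OF sB] conjunct2[OF tB] by simp
  qed
  moreover have "F ?SC = H ?SC"
  proof -
    have "(\<lambda>x k. \<Sum>s\<in>{1..p+q}. c s * F (part s) x k) = (\<lambda>x k. \<Sum>s\<in>{1..p+q}. c s * H (part s) x k)"
    proof (intro ext sum.cong refl)
      fix x k s assume "s \<in> {1..p+q}"
      then have "F (part s) = H (part s)" by (intro ec)
      then show "c s * F (part s) x k = c s * H (part s) x k" by simp
    qed
    then show ?thesis using conjunct2[OF sC] conjunct2[OF tC] by simp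
  qed
  ultimately show ?thesis by simp
qed



lemma mm0l[simp]: "mm p q (\<lambda>_ _. 0) B k l = 0" by (simp add: mm_def)
lemma mm0r[simp]: "mm p q A (\<lambda>_ _. 0) k l = 0" by (simp add: mm_def)
lemma mv0l[simp]: "mv p q (\<lambda>_ _. 0) v k = 0" by (simp add: mv_def)
lemma mv0r[simp]: "mv p q A (\<lambda>_. 0) k = 0" by (simp add: mv_def)
lemma mv_ev: "j \<in> {1..p+q} \<Longrightarrow> mv p q A (ev j) k = A k j"
  using sum_ev[of j "p+q" "\<lambda>m. A k m"] by (simp add: mv_def)
lemma vsc_aff: "vsc c (aff p q A b) = aff p q (\<lambda>k l. c * A k l) (\<lambda>k. c * b k)"
  by (auto simp: vsc_def aff_def algebra_simps sum_distrib_left intro!: ext)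
lemma Vt_vsc: "Vt (vsc c X) k = c * Vt X k" by (simp add: Vt_def vsc_def)
lemma eta_cancel: "eta p i * (eta p i * x) = x"
  by (simp add: eta_def)
lemma G_swap: "i \<noteq> j \<Longrightarrow> G p j i = (\<lambda>k l. - (eta p i * eta p j) * G p i j k l)"
  by (auto simp: G_def eta_def intro!: ext)
lemma third: "p + q \<ge> 4 \<Longrightarrow> \<exists>i\<in>{1..p+q}. i \<noteq> (a::nat) \<and> i \<noteq> b \<and> i \<noteq> c"
proof -
  assume "p + q \<ge> 4"
  have "\<exists>i::nat. 1 \<le> i \<and> i \<le> (4::nat) \<and> i \<noteq> a \<and> i \<noteq> b \<and> i \<noteq> c" by presburger
  then show ?thesis using \<open>p + q \<ge> 4\<close> by auto
qed

lemma der_coord: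
  assumes D: "derF p q F" and sA: "skew p q A" and sB: "skew p q B"
    and FA: "F (aff p q A a) = aff p q A' a'" and FB: "F (aff p q B b) = aff p q B' b'"
  shows "F (aff p q (\<lambda>k l. mm p q B A k l - mm p q A B k l) (\<lambda>k. mv p q B a k - mv p q A b k))
    = aff p q (\<lambda>k l. (mm p q B A' k l - mm p q A' B k l) + 1 * (mm p q B' A k l - mm p q A B' k l))
              (\<lambda>k. (mv p q B a' k - mv p q A' b k) + 1 * (mv p q B' a k - mv p q A b' k))"
proof -
  have X: "aff p q A a \<in> hpq p q" and Y: "aff p q B b \<in> hpq p q" using sA sB aff_in_hpq by auto
  have "F (aff p q (\<lambda>k l. mm p q B A k l - mm p q A B k l) (\<lambda>k. mv p q B a k - mv p q A b k))
      = F (br p q (aff p q A a) (aff p q B b))" by (simp add: br_aff)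
  also have "\<dots> = vadd (br p q (F (aff p q A a)) (aff p q B b)) (br p q (aff p q A a) (F (aff p q B b)))"
    using D X Y unfolding derF_def by blast
  also have "\<dots> = vadd (br p q (aff p q A' a') (aff p q B b)) (vsc 1 (br p q (aff p q A a) (aff p q B' b')))"
    unfolding FA FB vsc_one ..
  also have "\<dots> = aff p q (\<lambda>k l. (mm p q B A' k l - mm p q A' B k l) + 1 * (mm p q B' A k l - mm p q A B' k l))
              (\<lambda>k. (mv p q B a' k - mv p q A' b k) + 1 * (mv p q B' a k - mv p q A b' k))"
    unfolding br_aff vadd_aff ..
  finally show ?thesis .
qed

locale dctx =
  fixes p q :: nat and F :: "vf \<Rightarrow> vf"
  assumes D: "derF p q F" and n4: "p + q \<ge> 4"
begin

definition FM where "FM A b = Mt (F (aff p q A b))"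
definition FV where "FV A b = Vt (F (aff p q A b))"
definition M where "M k i = FV (\<lambda>_ _. 0) (ev i) k"

lemma linF: "linF p q F" using D by (simp add: derF_def)

lemma Frep: assumes "skew p q A" shows "F (aff p q A b) = aff p q (FM A b) (FV A b) \<and> skew p q (FM A b)"
proof -
  have "F (aff p q A b) \<in> hpq p q" using D aff_in_hpq[OF assms] unfolding derF_def by blast
  then show ?thesis using rep unfolding FM_def FV_def by blast
qed

lemma Frep1: "skew p q A \<Longrightarrow> F (aff p q A b) = aff p q (FM A b) (FV A b)" using Frep by blast
lemma Fskew: "skew p q A \<Longrightarrow> skew p q (FM A b)" using Frep by blast

lemma skewE: "skew p q A \<Longrightarrow> k \<in> {1..p+q} \<Longrightarrow> l \<in> {1..p+q} \<Longrightarrow> eta p k * A k l = - (eta p l * A l k)"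
  unfolding skew_def by blast

lemma Fzero: "F vzero = vzero" using linF_zero[OF linF] .

lemma S_sym:
  assumes i: "i \<in> {1..p+q}" and j: "j \<in> {1..p+q}" and k: "k \<in> {1..p+q}"
  shows "FM (\<lambda>_ _. 0) (ev i) k j = FM (\<lambda>_ _. 0) (ev j) k i"
proof -
  have e: "F (aff p q (\<lambda>k l. mm p q (\<lambda>_ _. 0) (\<lambda>_ _. 0) k l - mm p q (\<lambda>_ _. 0) (\<lambda>_ _. 0) k l)
      (\<lambda>k. mv p q (\<lambda>_ _. 0) (ev i) k - mv p q (\<lambda>_ _. 0) (ev j) k))
    = aff p q (\<lambda>k l. (mm p q (\<lambda>_ _. 0) (FM (\<lambda>_ _. 0) (ev i)) k l - mm p q (FM (\<lambda>_ _. 0) (ev i)) (\<lambda>_ _. 0) k l)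
          + 1 * (mm p q (FM (\<lambda>_ _. 0) (ev j)) (\<lambda>_ _. 0) k l - mm p q (\<lambda>_ _. 0) (FM (\<lambda>_ _. 0) (ev j)) k l))
      (\<lambda>k. (mv p q (\<lambda>_ _. 0) (FV (\<lambda>_ _. 0) (ev i)) k - mv p q (FM (\<lambda>_ _. 0) (ev i)) (ev j) k)
          + 1 * (mv p q (FM (\<lambda>_ _. 0) (ev j)) (ev i) k - mv p q (\<lambda>_ _. 0) (FV (\<lambda>_ _. 0) (ev j)) k))"
    by (rule der_coord[OF D skew_zero skew_zero Frep1[OF skew_zero] Frep1[OF skew_zero]])
  have l: "aff p q (\<lambda>k l. mm p q (\<lambda>_ _. 0) (\<lambda>_ _. 0) k l - mm p q (\<lambda>_ _. 0) (\<lambda>_ _. 0) k l)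
      (\<lambda>k. mv p q (\<lambda>_ _. 0) (ev i) k - mv p q (\<lambda>_ _. 0) (ev j) k) = vzero"
    by (simp add: vzero_aff[of p q])
  have "vzero = aff p q (\<lambda>k l. 0 + 1 * (mm p q (FM (\<lambda>_ _. 0) (ev j)) (\<lambda>_ _. 0) k l - 0))
      (\<lambda>k. (0 - FM (\<lambda>_ _. 0) (ev i) k j) + 1 * (FM (\<lambda>_ _. 0) (ev j) k i - 0))"
    using e unfolding l Fzero using mv_ev[OF i] mv_ev[OF j] by simp
  then have "0 = (0 - FM (\<lambda>_ _. 0) (ev i) k j) + 1 * (FM (\<lambda>_ _. 0) (ev j) k i - 0)"
    unfolding vzero_aff[of p q] aff_eq_iff using k by blast
  then show ?thesis by simp
qed

lemma S_zero:
  assumes i: "i \<in> {1..p+q}" and j: "j \<in> {1..p+q}" and k: "k \<in> {1..p+q}"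
  shows "FM (\<lambda>_ _. 0) (ev i) k j = 0"
proof -
  let ?S = "\<lambda>i k j. FM (\<lambda>_ _. 0) (ev i) k j"
  have sk: "\<And>i k j. i \<in> {1..p+q} \<Longrightarrow> k \<in> {1..p+q} \<Longrightarrow> j \<in> {1..p+q} \<Longrightarrow> eta p k * ?S i k j = - (eta p j * ?S i j k)"
    by (rule skewE[OF Fskew[OF skew_zero]])
  have "eta p k * ?S i k j = - (eta p j * ?S i j k)" by (rule sk[OF i k j])
  also have "?S i j k = ?S k j i" by (rule S_sym[OF i k j])
  also have "eta p j * ?S k j i = - (eta p i * ?S k i j)" by (rule sk[OF k j i])
  also have "?S k i j = ?S j i k" by (rule S_sym[OF k j i])
  also have "eta p i * ?S j i k = - (eta p k * ?S j k i)" by (rule sk[OF j i k])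
  also have "?S j k i = ?S i k j" by (rule S_sym[OF j i k])
  finally have "eta p k * ?S i k j = - (eta p k * ?S i k j)" by simp
  then have "eta p k * ?S i k j = 0" by linarith
  then show ?thesis by simp
qed

lemma F_trans: "F (aff p q (\<lambda>_ _. 0) v) = aff p q (\<lambda>_ _. 0) (mv p q M v)"
proof -
  have hC: "\<forall>s\<in>{1..p+q}. aff p q (\<lambda>_ _. 0) (ev s) \<in> hpq p q" using aff_in_hpq[OF skew_zero] by blast
  note sC = linF_sum[OF linF finite_atLeastAtMost, where Y="\<lambda>s. aff p q (\<lambda>_ _. 0) (ev s)" and w=v, THEN mp, OF hC]
  have e1: "aff p q (\<lambda>_ _. 0) v = (\<lambda>x k. \<Sum>s\<in>{1..p+q}. v s * aff p q (\<lambda>_ _. 0) (ev s) x k)"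
    unfolding vsum_aff aff_eq_iff
  proof (intro conjI ballI)
    fix k assume "k \<in> {1..p+q}"
    then show "v k = (\<Sum>s\<in>{1..p+q}. v s * ev s k)" using sum_ev2[of k "p+q" v] by simp
  qed simp
  have "F (aff p q (\<lambda>_ _. 0) v) = (\<lambda>x k. \<Sum>s\<in>{1..p+q}. v s * F (aff p q (\<lambda>_ _. 0) (ev s)) x k)"
    unfolding e1 using sC by blast
  also have "\<dots> = (\<lambda>x k. \<Sum>s\<in>{1..p+q}. v s * aff p q (FM (\<lambda>_ _. 0) (ev s)) (FV (\<lambda>_ _. 0) (ev s)) x k)"
    by (simp add: Frep1[OF skew_zero])
  also have "\<dots> = aff p q (\<lambda>_ _. 0) (mv p q M v)"
    unfolding vsum_aff aff_eq_iff
    by (simp add: S_zero M_def mv_def mult.commute)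
  finally show ?thesis .
qed

lemma FM_comm:
  assumes sA: "skew p q A" and k: "k \<in> {1..p+q}" and i: "i \<in> {1..p+q}"
  shows "FM A (\<lambda>_. 0) k i = mm p q M A k i - mm p q A M k i"
proof -
  have e: "F (aff p q (\<lambda>k l. mm p q (\<lambda>_ _. 0) A k l - mm p q A (\<lambda>_ _. 0) k l)
      (\<lambda>k. mv p q (\<lambda>_ _. 0) (\<lambda>_. 0) k - mv p q A (ev i) k))
    = aff p q (\<lambda>k l. (mm p q (\<lambda>_ _. 0) (FM A (\<lambda>_. 0)) k l - mm p q (FM A (\<lambda>_. 0)) (\<lambda>_ _. 0) k l)
          + 1 * (mm p q (FM (\<lambda>_ _. 0) (ev i)) A k l - mm p q A (FM (\<lambda>_ _. 0) (ev i)) k l))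
      (\<lambda>k. (mv p q (\<lambda>_ _. 0) (FV A (\<lambda>_. 0)) k - mv p q (FM A (\<lambda>_. 0)) (ev i) k)
          + 1 * (mv p q (FM (\<lambda>_ _. 0) (ev i)) (\<lambda>_. 0) k - mv p q A (FV (\<lambda>_ _. 0) (ev i)) k))"
    by (rule der_coord[OF D sA skew_zero Frep1[OF sA] Frep1[OF skew_zero]])
  have l: "aff p q (\<lambda>k l. mm p q (\<lambda>_ _. 0) A k l - mm p q A (\<lambda>_ _. 0) k l)
      (\<lambda>k. mv p q (\<lambda>_ _. 0) (\<lambda>_. 0) k - mv p q A (ev i) k) = aff p q (\<lambda>_ _. 0) (\<lambda>k. - A k i)"
    unfolding aff_eq_iff using mv_ev[OF i] by simp
  have "aff p q (\<lambda>_ _. 0) (mv p q M (\<lambda>k. - A k i)) = aff p q (\<lambda>k l. (mm p q (\<lambda>_ _. 0) (FM A (\<lambda>_. 0)) k l - mm p q (FM A (\<lambda>_. 0)) (\<lambda>_ _. 0) k l)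
          + 1 * (mm p q (FM (\<lambda>_ _. 0) (ev i)) A k l - mm p q A (FM (\<lambda>_ _. 0) (ev i)) k l))
      (\<lambda>k. (mv p q (\<lambda>_ _. 0) (FV A (\<lambda>_. 0)) k - mv p q (FM A (\<lambda>_. 0)) (ev i) k)
          + 1 * (mv p q (FM (\<lambda>_ _. 0) (ev i)) (\<lambda>_. 0) k - mv p q A (FV (\<lambda>_ _. 0) (ev i)) k))"
    using e unfolding l F_trans .
  then have "mv p q M (\<lambda>k. - A k i) k = (mv p q (\<lambda>_ _. 0) (FV A (\<lambda>_. 0)) k - mv p q (FM A (\<lambda>_. 0)) (ev i) k)
          + 1 * (mv p q (FM (\<lambda>_ _. 0) (ev i)) (\<lambda>_. 0) k - mv p q A (FV (\<lambda>_ _. 0) (ev i)) k)"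
    unfolding aff_eq_iff using k by blast
  then have "- mm p q M A k i = - FM A (\<lambda>_. 0) k i - mm p q A M k i"
    using mv_ev[OF i] by (simp add: mv_def mm_def M_def sum_negf)
  then show ?thesis by simp
qed

end



context dctx
begin

lemma FMG: "i \<noteq> j \<Longrightarrow> m \<in> {1..p+q} \<Longrightarrow> l \<in> {1..p+q} \<Longrightarrow>
   FM (G p i j) (\<lambda>_. 0) m l = mm p q M (G p i j) m l - mm p q (G p i j) M m l"
  by (rule FM_comm[OF skew_G])

lemma M_off:
  assumes m: "m \<in> {1..p+q}" and j: "j \<in> {1..p+q}" and mj: "m \<noteq> j"
  shows "eta p m * M m j = - (eta p j * M j m)"
proof -
  obtain i where i: "i \<in> {1..p+q}" and im: "i \<noteq> m" and ij: "i \<noteq> j" using third[OF n4, of m j j] by blast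
  have sk: "eta p m * FM (G p i j) (\<lambda>_. 0) m i = - (eta p i * FM (G p i j) (\<lambda>_. 0) i m)"
    by (rule skewE[OF Fskew[OF skew_G[OF ij]] m i])
  have a: "FM (G p i j) (\<lambda>_. 0) m i = M m j"
    using FMG[OF ij m i] mm_G_right[OF i j ij, of M m i] mm_G_left[OF i j ij, of M m i] im mj by simp
  have b: "FM (G p i j) (\<lambda>_. 0) i m = eta p i * eta p j * M j m"
    using FMG[OF ij i m] mm_G_right[OF i j ij, of M i m] mm_G_left[OF i j ij, of M i m] im ij mj by simp
  show ?thesis using sk unfolding a b by (cases "i \<le> p"; cases "j \<le> p") (simp_all add: eta_def)
qed

lemma M_diag:
  assumes i: "i \<in> {1..p+q}" and j: "j \<in> {1..p+q}"
  shows "M i i = M j j"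
proof (cases "i = j")
  case False
  then have ij: "i \<noteq> j" .
  have sk: "eta p j * FM (G p i j) (\<lambda>_. 0) j i = - (eta p i * FM (G p i j) (\<lambda>_. 0) i j)"
    by (rule skewE[OF Fskew[OF skew_G[OF ij]] j i])
  have a: "FM (G p i j) (\<lambda>_. 0) j i = M j j - M i i"
    using FMG[OF ij j i] mm_G_right[OF i j ij, of M j i] mm_G_left[OF i j ij, of M j i] ij by simp
  have b: "FM (G p i j) (\<lambda>_. 0) i j = - (eta p i * eta p j) * M i i + eta p i * eta p j * M j j"
    using FMG[OF ij i j] mm_G_right[OF i j ij, of M i j] mm_G_left[OF i j ij, of M i j] ij by simp
  show ?thesis using sk unfolding a b by (cases "i \<le> p"; cases "j \<le> p") (simp_all add: eta_def)
qed simp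

definition lam where "lam = M 1 1"
definition Nm where "Nm k l = (if k = l then 0 else M k l)"

lemma one_in: "(1::nat) \<in> {1..p+q}" using n4 by simp

lemma Nm_skew: "skew p q Nm"
  unfolding skew_def
proof (intro ballI)
  fix k l assume k: "k \<in> {1..p+q}" and l: "l \<in> {1..p+q}"
  show "eta p k * Nm k l = - (eta p l * Nm l k)"
    using M_off[OF k l] by (cases "k = l") (auto simp: Nm_def)
qed

lemma M_dec: "k \<in> {1..p+q} \<Longrightarrow> l \<in> {1..p+q} \<Longrightarrow> M k l = Nm k l + (if k = l then lam else 0)"
proof -
  assume k: "k \<in> {1..p+q}" and l: "l \<in> {1..p+q}"
  show ?thesis
  proof (cases "k = l")
    case True
    then show ?thesis using M_diag[OF k one_in] by (simp add: Nm_def lam_def)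
  qed (simp add: Nm_def)
qed

lemma mm_M_left:
  assumes k: "k \<in> {1..p+q}"
  shows "mm p q M X k l = mm p q Nm X k l + lam * X k l"
proof -
  have "mm p q M X k l = (\<Sum>r=1..p+q. Nm k r * X r l + (if r = k then lam * X r l else 0))"
    unfolding mm_def using k by (intro sum.cong refl) (auto simp: M_dec algebra_simps)
  also have "\<dots> = mm p q Nm X k l + lam * X k l" using k by (simp add: sum.distrib mm_def)
  finally show ?thesis .
qed

lemma mm_M_right:
  assumes l: "l \<in> {1..p+q}"
  shows "mm p q X M k l = mm p q X Nm k l + lam * X k l"
proof -
  have "mm p q X M k l = (\<Sum>r=1..p+q. X k r * Nm r l + (if r = l then lam * X k r else 0))"
    unfolding mm_def using l by (intro sum.cong refl) (auto simp: M_dec algebra_simps)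
  also have "\<dots> = mm p q X Nm k l + lam * X k l" using l by (simp add: sum.distrib mm_def mult.commute)
  finally show ?thesis .
qed

definition u where "u i j m = FV (G p i j) (\<lambda>_. 0) m"

lemma R1:
  assumes i: "i \<in> {1..p+q}" and j: "j \<in> {1..p+q}" and k: "k \<in> {1..p+q}" and l: "l \<in> {1..p+q}"
    and d: "i \<noteq> j" "i \<noteq> k" "i \<noteq> l" "j \<noteq> k" "j \<noteq> l" "k \<noteq> l"
  shows "u i j k = 0"
proof -
  have e: "F (aff p q (\<lambda>m l'. mm p q (G p i j) (G p k l) m l' - mm p q (G p k l) (G p i j) m l')
      (\<lambda>m. mv p q (G p i j) (\<lambda>_. 0) m - mv p q (G p k l) (\<lambda>_. 0) m))
    = aff p q (\<lambda>m l'. (mm p q (G p i j) (FM (G p k l) (\<lambda>_. 0)) m l' - mm p q (FM (G p k l) (\<lambda>_. 0)) (G p i j) m l')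
          + 1 * (mm p q (FM (G p i j) (\<lambda>_. 0)) (G p k l) m l' - mm p q (G p k l) (FM (G p i j) (\<lambda>_. 0)) m l'))
      (\<lambda>m. (mv p q (G p i j) (FV (G p k l) (\<lambda>_. 0)) m - mv p q (FM (G p k l) (\<lambda>_. 0)) (\<lambda>_. 0) m)
          + 1 * (mv p q (FM (G p i j) (\<lambda>_. 0)) (\<lambda>_. 0) m - mv p q (G p k l) (FV (G p i j) (\<lambda>_. 0)) m))"
    by (rule der_coord[OF D skew_G[OF d(6)] skew_G[OF d(1)] Frep1[OF skew_G[OF d(6)]] Frep1[OF skew_G[OF d(1)]]])
  have z: "aff p q (\<lambda>m l'. mm p q (G p i j) (G p k l) m l' - mm p q (G p k l) (G p i j) m l')
      (\<lambda>m. mv p q (G p i j) (\<lambda>_. 0) m - mv p q (G p k l) (\<lambda>_. 0) m) = vzero"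
    unfolding vzero_aff[of p q] aff_eq_iff
  proof (intro conjI ballI)
    fix m l' assume m: "m \<in> {1..p+q}" and l': "l' \<in> {1..p+q}"
    show "mm p q (G p i j) (G p k l) m l' - mm p q (G p k l) (G p i j) m l' = 0"
      unfolding mm_G_left[OF i j d(1)] mm_G_left[OF k l d(6)] using d by (simp add: G_def)
  qed simp
  have "vzero = aff p q (\<lambda>m l'. (mm p q (G p i j) (FM (G p k l) (\<lambda>_. 0)) m l' - mm p q (FM (G p k l) (\<lambda>_. 0)) (G p i j) m l')
          + 1 * (mm p q (FM (G p i j) (\<lambda>_. 0)) (G p k l) m l' - mm p q (G p k l) (FM (G p i j) (\<lambda>_. 0)) m l'))
      (\<lambda>m. (mv p q (G p i j) (FV (G p k l) (\<lambda>_. 0)) m - mv p q (FM (G p k l) (\<lambda>_. 0)) (\<lambda>_. 0) m)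
          + 1 * (mv p q (FM (G p i j) (\<lambda>_. 0)) (\<lambda>_. 0) m - mv p q (G p k l) (FV (G p i j) (\<lambda>_. 0)) m))"
    using e unfolding z Fzero .
  then have "0 = (mv p q (G p i j) (FV (G p k l) (\<lambda>_. 0)) l - mv p q (FM (G p k l) (\<lambda>_. 0)) (\<lambda>_. 0) l)
          + 1 * (mv p q (FM (G p i j) (\<lambda>_. 0)) (\<lambda>_. 0) l - mv p q (G p k l) (FV (G p i j) (\<lambda>_. 0)) l)"
    unfolding vzero_aff[of p q] aff_eq_iff using l by blast
  then show ?thesis unfolding mv_G[OF i j d(1)] mv_G[OF k l d(6)] u_def using d by simp
qed

lemma R2:
  assumes i: "i \<in> {1..p+q}" and j: "j \<in> {1..p+q}" and k: "k \<in> {1..p+q}"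
    and d: "i \<noteq> j" "i \<noteq> k" "j \<noteq> k"
  shows "u i k k = u i j j"
proof -
  have e: "F (aff p q (\<lambda>m l'. mm p q (G p i j) (G p j k) m l' - mm p q (G p j k) (G p i j) m l')
      (\<lambda>m. mv p q (G p i j) (\<lambda>_. 0) m - mv p q (G p j k) (\<lambda>_. 0) m))
    = aff p q (\<lambda>m l'. (mm p q (G p i j) (FM (G p j k) (\<lambda>_. 0)) m l' - mm p q (FM (G p j k) (\<lambda>_. 0)) (G p i j) m l')
          + 1 * (mm p q (FM (G p i j) (\<lambda>_. 0)) (G p j k) m l' - mm p q (G p j k) (FM (G p i j) (\<lambda>_. 0)) m l'))
      (\<lambda>m. (mv p q (G p i j) (FV (G p j k) (\<lambda>_. 0)) m - mv p q (FM (G p j k) (\<lambda>_. 0)) (\<lambda>_. 0) m)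
          + 1 * (mv p q (FM (G p i j) (\<lambda>_. 0)) (\<lambda>_. 0) m - mv p q (G p j k) (FV (G p i j) (\<lambda>_. 0)) m))"
    by (rule der_coord[OF D skew_G[OF d(3)] skew_G[OF d(1)] Frep1[OF skew_G[OF d(3)]] Frep1[OF skew_G[OF d(1)]]])
  have z: "aff p q (\<lambda>m l'. mm p q (G p i j) (G p j k) m l' - mm p q (G p j k) (G p i j) m l')
      (\<lambda>m. mv p q (G p i j) (\<lambda>_. 0) m - mv p q (G p j k) (\<lambda>_. 0) m) = vsc (-1) (aff p q (G p i k) (\<lambda>_. 0))"
    unfolding vsc_aff aff_eq_iff
  proof (intro conjI ballI)
    fix m l' assume m: "m \<in> {1..p+q}" and l': "l' \<in> {1..p+q}"
    show "mm p q (G p i j) (G p j k) m l' - mm p q (G p j k) (G p i j) m l' = -1 * G p i k m l'"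
      unfolding mm_G_left[OF i j d(1)] mm_G_left[OF j k d(3)] using d
      by (cases "i \<le> p"; cases "j \<le> p"; cases "k \<le> p") (auto simp: G_def eta_def)
  qed simp
  have "F (vsc (-1) (aff p q (G p i k) (\<lambda>_. 0))) = vsc (-1) (aff p q (FM (G p i k) (\<lambda>_. 0)) (FV (G p i k) (\<lambda>_. 0)))"
    using linF_sc[OF linF aff_in_hpq[OF skew_G[OF d(2)]]] Frep1[OF skew_G[OF d(2)]] by simp
  then have "vsc (-1) (aff p q (FM (G p i k) (\<lambda>_. 0)) (FV (G p i k) (\<lambda>_. 0))) = aff p q (\<lambda>m l'. (mm p q (G p i j) (FM (G p j k) (\<lambda>_. 0)) m l' - mm p q (FM (G p j k) (\<lambda>_. 0)) (G p i j) m l')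
          + 1 * (mm p q (FM (G p i j) (\<lambda>_. 0)) (G p j k) m l' - mm p q (G p j k) (FM (G p i j) (\<lambda>_. 0)) m l'))
      (\<lambda>m. (mv p q (G p i j) (FV (G p j k) (\<lambda>_. 0)) m - mv p q (FM (G p j k) (\<lambda>_. 0)) (\<lambda>_. 0) m)
          + 1 * (mv p q (FM (G p i j) (\<lambda>_. 0)) (\<lambda>_. 0) m - mv p q (G p j k) (FV (G p i j) (\<lambda>_. 0)) m))"
    using e unfolding z by simp
  then have "-1 * FV (G p i k) (\<lambda>_. 0) k = (mv p q (G p i j) (FV (G p j k) (\<lambda>_. 0)) k - mv p q (FM (G p j k) (\<lambda>_. 0)) (\<lambda>_. 0) k)
          + 1 * (mv p q (FM (G p i j) (\<lambda>_. 0)) (\<lambda>_. 0) k - mv p q (G p j k) (FV (G p i j) (\<lambda>_. 0)) k)"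
    unfolding vsc_aff aff_eq_iff using k by blast
  then show ?thesis unfolding mv_G[OF i j d(1)] mv_G[OF j k d(3)] u_def using d by simp
qed

lemma R3:
  assumes ij: "i \<noteq> j"
  shows "u j i m = - (eta p i * eta p j) * u i j m"
proof -
  have e: "aff p q (G p j i) (\<lambda>_. 0) = vsc (- (eta p i * eta p j)) (aff p q (G p i j) (\<lambda>_. 0))"
    unfolding vsc_aff G_swap[OF ij] by simp
  have "F (aff p q (G p j i) (\<lambda>_. 0)) = vsc (- (eta p i * eta p j)) (F (aff p q (G p i j) (\<lambda>_. 0)))"
    unfolding e by (rule linF_sc[OF linF aff_in_hpq[OF skew_G[OF ij]]])
  then show ?thesis unfolding u_def FV_def by (simp add: Vt_vsc)
qed

end



context dctx
begin

definition j0 :: "nat \<Rightarrow> nat" where "j0 i = (if i = 1 then 2 else 1)"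
definition dd where "dd i = - u i (j0 i) (j0 i)"

lemma j0: "i \<in> {1..p+q} \<Longrightarrow> j0 i \<in> {1..p+q} \<and> j0 i \<noteq> i"
  using n4 by (auto simp: j0_def)

lemma uj:
  assumes i: "i \<in> {1..p+q}" and j: "j \<in> {1..p+q}" and ij: "i \<noteq> j"
  shows "u i j j = - dd i"
proof (cases "j = j0 i")
  case True
  then show ?thesis by (simp add: dd_def)
next
  case False
  have "u i (j0 i) (j0 i) = u i j j" using R2[of i j "j0 i"] i j ij j0[OF i] False by auto
  then show ?thesis by (simp add: dd_def)
qed

lemma u_eq:
  assumes i: "i \<in> {1..p+q}" and j: "j \<in> {1..p+q}" and m: "m \<in> {1..p+q}" and ij: "i \<noteq> j"
  shows "u i j m = - mv p q (G p i j) dd m"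
proof -
  consider "m = j" | "m = i" | "m \<noteq> i" "m \<noteq> j" by blast
  then show ?thesis
  proof cases
    case 1
    then show ?thesis using uj[OF i j ij] mv_G[OF i j ij, of dd m] by simp
  next
    case 2
    have "u i j i = - (eta p j * eta p i) * u j i i" using R3[of j i i] ij by simp
    also have "u j i i = - dd j" using uj[OF j i] ij by simp
    finally show ?thesis using 2 mv_G[OF i j ij, of dd m] ij by (simp add: mult.commute)
  next
    case 3
    obtain l where l: "l \<in> {1..p+q}" "l \<noteq> i" "l \<noteq> j" "l \<noteq> m" using third[OF n4, of i j m] by blast
    have "u i j m = 0" by (rule R1[OF i j m l(1)]) (use ij 3 l in auto)
    then show ?thesis using 3 mv_G[OF i j ij, of dd m] by simp
  qed
qed

definition Hm where "Hm X = vadd (vsc lam (Imap p q X)) (br p q X (aff p q Nm dd))"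

lemma H_aff:
  assumes "skew p q A"
  shows "Hm (aff p q A a) = aff p q (\<lambda>k l. mm p q Nm A k l - mm p q A Nm k l) (\<lambda>k. lam * a k + (mv p q Nm a k - mv p q A dd k))"
proof -
  have "Hm (aff p q A a) = vadd (aff p q (\<lambda>k l. lam * 0) (\<lambda>k. lam * a k)) (aff p q (\<lambda>k l. mm p q Nm A k l - mm p q A Nm k l) (\<lambda>k. mv p q Nm a k - mv p q A dd k))"
    unfolding Hm_def Imap_aff[OF assms] vsc_aff br_aff ..
  also have "\<dots> = vadd (aff p q (\<lambda>k l. lam * 0) (\<lambda>k. lam * a k)) (vsc 1 (aff p q (\<lambda>k l. mm p q Nm A k l - mm p q A Nm k l) (\<lambda>k. mv p q Nm a k - mv p q A dd k)))"
    by (simp only: vsc_one)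
  also have "\<dots> = aff p q (\<lambda>k l. mm p q Nm A k l - mm p q A Nm k l) (\<lambda>k. lam * a k + (mv p q Nm a k - mv p q A dd k))"
    unfolding vadd_aff by simp
  finally show ?thesis .
qed

lemma mm_lin_r: "mm p q X (\<lambda>k l. A k l + c * B k l) k l = mm p q X A k l + c * mm p q X B k l"
  by (simp add: mm_def sum.distrib sum_distrib_left algebra_simps)
lemma mm_lin_l: "mm p q (\<lambda>k l. A k l + c * B k l) X k l = mm p q A X k l + c * mm p q B X k l"
  by (simp add: mm_def sum.distrib sum_distrib_left algebra_simps)
lemma mv_lin_r: "mv p q X (\<lambda>k. a k + c * b k) k = mv p q X a k + c * mv p q X b k"
  by (simp add: mv_def sum.distrib sum_distrib_left algebra_simps)
lemma mv_lin_l: "mv p q (\<lambda>k l. A k l + c * B k l) v k = mv p q A v k + c * mv p q B v k"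
  by (simp add: mv_def sum.distrib sum_distrib_left algebra_simps)

lemma linH: "linF p q Hm"
  unfolding linF_def
proof (intro ballI allI)
  fix x y c assume x: "x \<in> hpq p q" and y: "y \<in> hpq p q"
  obtain A a where sA: "skew p q A" and xe: "x = aff p q A a" using x hpq_char by blast
  obtain B b where sB: "skew p q B" and ye: "y = aff p q B b" using y hpq_char by blast
  have "Hm (vadd x (vsc c y)) = Hm (aff p q (\<lambda>k l. A k l + c * B k l) (\<lambda>k. a k + c * b k))"
    unfolding xe ye vadd_aff ..
  also have "\<dots> = aff p q (\<lambda>k l. mm p q Nm (\<lambda>k l. A k l + c * B k l) k l - mm p q (\<lambda>k l. A k l + c * B k l) Nm k l)
     (\<lambda>k. lam * (a k + c * b k) + (mv p q Nm (\<lambda>k. a k + c * b k) k - mv p q (\<lambda>k l. A k l + c * B k l) dd k))"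
    by (rule H_aff[OF skew_lin[OF sA sB]])
  also have "\<dots> = vadd (Hm x) (vsc c (Hm y))"
    unfolding xe ye H_aff[OF sA] H_aff[OF sB] vadd_aff aff_eq_iff mm_lin_r mm_lin_l mv_lin_r mv_lin_l
    by (simp add: algebra_simps)
  finally show "Hm (vadd x (vsc c y)) = vadd (Hm x) (vsc c (Hm y))" .
qed

lemma basisG:
  assumes i: "i \<in> {1..p+q}" and j: "j \<in> {1..p+q}" and ij: "i \<noteq> j"
  shows "F (aff p q (G p i j) (\<lambda>_. 0)) = Hm (aff p q (G p i j) (\<lambda>_. 0))"
  unfolding Frep1[OF skew_G[OF ij]] H_aff[OF skew_G[OF ij]] aff_eq_iff
proof (intro conjI ballI)
  fix k l assume k: "k \<in> {1..p+q}" and l: "l \<in> {1..p+q}"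
  show "FM (G p i j) (\<lambda>_. 0) k l = mm p q Nm (G p i j) k l - mm p q (G p i j) Nm k l"
    using FMG[OF ij k l] mm_M_left[OF k, of "G p i j" l] mm_M_right[OF l, of "G p i j" k] by simp
next
  fix k assume k: "k \<in> {1..p+q}"
  show "FV (G p i j) (\<lambda>_. 0) k = lam * 0 + (mv p q Nm (\<lambda>_. 0) k - mv p q (G p i j) dd k)"
    using u_eq[OF i j k ij] unfolding u_def by simp
qed

lemma basisT:
  assumes i: "i \<in> {1..p+q}"
  shows "F (aff p q (\<lambda>_ _. 0) (ev i)) = Hm (aff p q (\<lambda>_ _. 0) (ev i))"
  unfolding F_trans H_aff[OF skew_zero] aff_eq_iff
proof (intro conjI ballI)
  fix k assume k: "k \<in> {1..p+q}"
  show "mv p q M (ev i) k = lam * ev i k + (mv p q Nm (ev i) k - mv p q (\<lambda>_ _. 0) dd k)"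
    unfolding mv_ev[OF i] using M_dec[OF k i] by (simp add: ev_def)
qed simp

lemma main_F: "X \<in> hpq p q \<Longrightarrow> F X = Hm X"
proof (rule lin_agree[OF linF linH])
  fix i j assume "(i,j) \<in> Aidx p q"
  then show "F (alpha i j) = Hm (alpha i j)"
    unfolding alpha_aff[OF \<open>(i,j) \<in> Aidx p q\<close>] by (intro basisG) (auto simp: Aidx_def)
next
  fix i j assume "(i,j) \<in> Bidx p q"
  then show "F (beta i j) = Hm (beta i j)"
    unfolding beta_aff[OF \<open>(i,j) \<in> Bidx p q\<close>] by (intro basisG) (auto simp: Bidx_def)
next
  fix i assume "i \<in> {1..p+q}"
  then show "F (part i) = Hm (part i)"
    unfolding part_aff[OF \<open>i \<in> {1..p+q}\<close>] by (rule basisT)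
qed

end



lemma cobdry1: "cobdry p q f [X] = br p q X (f [])"
  by (simp add: cobdry_def)

lemma cobdry2: "cobdry p q f [X, Y] = (\<lambda>x k. br p q X (f [Y]) x k + br p q (f [X]) Y x k - f [br p q X Y] x k)"
  by (simp add: cobdry_def del_def numeral_2_eq_2 lessThan_Suc)

lemma len1: "length xs = 1 \<Longrightarrow> \<exists>X. xs = [X]"
  by (cases xs) auto
lemma len2: "length xs = 2 \<Longrightarrow> \<exists>X Y. xs = [X, Y]"
  by (cases xs; cases "tl xs") auto

lemma skew_mm:
  assumes sA: "skew p q A" and sB: "skew p q B" and k: "k \<in> {1..p+q}" and l: "l \<in> {1..p+q}"
  shows "eta p k * mm p q B A k l = eta p l * mm p q A B l k"
proof -
  have "eta p k * mm p q B A k l = (\<Sum>r=1..p+q. eta p k * (B k r * A r l))"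
    by (simp add: mm_def sum_distrib_left)
  also have "\<dots> = (\<Sum>r=1..p+q. eta p l * (A l r * B r k))"
  proof (rule sum.cong[OF refl])
    fix r assume r: "r \<in> {1..p+q}"
    have h1: "eta p k * B k r = - (eta p r * B r k)" using sB k r unfolding skew_def by blast
    have h2: "eta p r * A r l = - (eta p l * A l r)" using sA r l unfolding skew_def by blast
    have "eta p k * (B k r * A r l) = (eta p k * B k r) * A r l" by (simp only: mult.assoc)
    also have "\<dots> = - (eta p r * B r k) * A r l" by (simp only: h1)
    also have "\<dots> = - (B r k * (eta p r * A r l))" by (simp add: mult_ac)
    also have "\<dots> = - (B r k * - (eta p l * A l r))" by (simp only: h2)
    also have "\<dots> = eta p l * (A l r * B r k)" by (simp add: mult_ac)
    finally show "eta p k * (B k r * A r l) = eta p l * (A l r * B r k)" .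
  qed
  also have "\<dots> = eta p l * mm p q A B l k" by (simp add: mm_def sum_distrib_left)
  finally show ?thesis .
qed

lemma skew_comm: "skew p q A \<Longrightarrow> skew p q B \<Longrightarrow> skew p q (\<lambda>k l. mm p q B A k l - mm p q A B k l)"
  unfolding skew_def[of p q "\<lambda>k l. mm p q B A k l - mm p q A B k l"]
proof (intro ballI)
  fix k l assume sA: "skew p q A" and sB: "skew p q B" and k: "k \<in> {1..p+q}" and l: "l \<in> {1..p+q}"
  have "eta p k * (mm p q B A k l - mm p q A B k l) = eta p k * mm p q B A k l - eta p k * mm p q A B k l"
    by (simp add: algebra_simps)
  also have "\<dots> = eta p l * mm p q A B l k - eta p l * mm p q B A l k"
    using skew_mm[OF sA sB k l] skew_mm[OF sB sA k l] by simp
  also have "\<dots> = - (eta p l * (mm p q B A l k - mm p q A B l k))" by (simp add: algebra_simps)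
  finally show "eta p k * (mm p q B A k l - mm p q A B k l) = - (eta p l * (mm p q B A l k - mm p q A B l k))" .
qed

lemma br_hpq: "X \<in> hpq p q \<Longrightarrow> Y \<in> hpq p q \<Longrightarrow> br p q X Y \<in> hpq p q"
proof -
  assume "X \<in> hpq p q" "Y \<in> hpq p q"
  then obtain A a B b where sA: "skew p q A" and X: "X = aff p q A a" and sB: "skew p q B" and Y: "Y = aff p q B b"
    using hpq_char by meson
  show ?thesis unfolding X Y br_aff by (rule aff_in_hpq[OF skew_comm[OF sA sB]])
qed

lemma mm_lin_r': "mm p q X (\<lambda>k l. A k l + c * B k l) k l = mm p q X A k l + c * mm p q X B k l"
  by (simp add: mm_def sum.distrib sum_distrib_left algebra_simps)
lemma mm_lin_l': "mm p q (\<lambda>k l. A k l + c * B k l) X k l = mm p q A X k l + c * mm p q B X k l"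
  by (simp add: mm_def sum.distrib sum_distrib_left algebra_simps)
lemma mv_lin_r': "mv p q X (\<lambda>k. a k + c * b k) k = mv p q X a k + c * mv p q X b k"
  by (simp add: mv_def sum.distrib sum_distrib_left algebra_simps)
lemma mv_lin_l': "mv p q (\<lambda>k l. A k l + c * B k l) v k = mv p q A v k + c * mv p q B v k"
  by (simp add: mv_def sum.distrib sum_distrib_left algebra_simps)

lemma br_lin1:
  assumes "u \<in> hpq p q" "v \<in> hpq p q" "W \<in> hpq p q"
  shows "br p q (vadd u (vsc c v)) W = vadd (br p q u W) (vsc c (br p q v W))"
proof -
  obtain A a where sA: "skew p q A" and u: "u = aff p q A a" using assms(1) hpq_char by blast
  obtain B b where sB: "skew p q B" and v: "v = aff p q B b" using assms(2) hpq_char by blast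
  obtain C c0 where sC: "skew p q C" and W: "W = aff p q C c0" using assms(3) hpq_char by blast
  show ?thesis unfolding u v W vadd_aff unfolding br_aff unfolding vadd_aff aff_eq_iff mm_lin_r' mm_lin_l' mv_lin_r' mv_lin_l'
    by (simp add: algebra_simps)
qed

lemma Imap_hpq: "X \<in> hpq p q \<Longrightarrow> Imap p q X \<in> hpq p q"
  using hpq_char Imap_aff aff_in_hpq skew_zero by metis

lemma Imap_lin:
  assumes "u \<in> hpq p q" "v \<in> hpq p q"
  shows "Imap p q (vadd u (vsc c v)) = vadd (Imap p q u) (vsc c (Imap p q v))"
proof -
  obtain A a where sA: "skew p q A" and u: "u = aff p q A a" using assms(1) hpq_char by blast
  obtain B b where sB: "skew p q B" and v: "v = aff p q B b" using assms(2) hpq_char by blast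
  show ?thesis unfolding u v vadd_aff unfolding Imap_aff[OF skew_lin[OF sA sB]] Imap_aff[OF sA] Imap_aff[OF sB] vadd_aff
    by simp
qed

lemma Imap_der:
  assumes "X \<in> hpq p q" "Y \<in> hpq p q"
  shows "br p q X (Imap p q Y) x k + br p q (Imap p q X) Y x k - Imap p q (br p q X Y) x k = 0"
proof -
  obtain A a where sA: "skew p q A" and X: "X = aff p q A a" using assms(1) hpq_char by blast
  obtain B b where sB: "skew p q B" and Y: "Y = aff p q B b" using assms(2) hpq_char by blast
  show ?thesis unfolding X Y br_aff Imap_aff[OF skew_comm[OF sA sB]] Imap_aff[OF sA] Imap_aff[OF sB]
    by (simp add: aff_def)
qed



theorem lemma7p4:
  fixes p q :: nat
  assumes "p + q \<ge> 4"
  shows "ZL p q 0 \<subseteq> BL p q 0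
    \<and> (\<lambda>xs. Imap p q (hd xs)) \<in> ZL p q 1
    \<and> (\<lambda>xs. Imap p q (hd xs)) \<notin> BL p q 1
    \<and> (\<forall>f\<in>ZL p q 1. \<exists>c::real. \<exists>g\<in>BL p q 1.
           eq_on p q 1 f (\<lambda>xs. vadd (vsc c (Imap p q (hd xs))) (g xs)))"
proof -
  have n4: "p + q \<ge> 4" by fact
  have one: "(1::nat) \<in> {1..p+q}" using n4 by simp
  have P1: "ZL p q 0 \<subseteq> BL p q 0"
  proof
    fix f assume fZ: "f \<in> ZL p q 0"
    then have fC: "f \<in> CL p q 0" and ec: "eq_on p q 1 (cobdry p q f) (\<lambda>_. vzero)" by (auto simp: ZL_def)
    have W: "f [] \<in> hpq p q" using fC unfolding CL_def by force
    have brz: "br p q X (f []) = vzero" if "X \<in> hpq p q" for X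
    proof -
      have "cobdry p q f [X] = vzero" using ec that unfolding eq_on_def by auto
      then show ?thesis by (simp add: cobdry1)
    qed
    obtain C c0 where sC: "skew p q C" and Wf: "f [] = aff p q C c0" using W hpq_char by blast
    have Cz: "C k i = 0" if k: "k \<in> {1..p+q}" and i: "i \<in> {1..p+q}" for k i
    proof -
      have "aff p q (\<lambda>k l. mm p q C (\<lambda>_ _. 0) k l - mm p q (\<lambda>_ _. 0) C k l) (\<lambda>k. mv p q C (ev i) k - mv p q (\<lambda>_ _. 0) c0 k)
          = aff p q (\<lambda>_ _. 0) (\<lambda>_. 0)"
        using brz[OF aff_in_hpq[OF skew_zero, where b="ev i" and p=p and q=q]] unfolding Wf br_aff vzero_aff[of p q] .
      then have "mv p q C (ev i) k - mv p q (\<lambda>_ _. 0) c0 k = 0" unfolding aff_eq_iff using k by blast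
      then show ?thesis using mv_ev[OF i] by simp
    qed
    have cz: "c0 i = 0" if i: "i \<in> {1..p+q}" for i
    proof -
      obtain j where j: "j \<in> {1..p+q}" and ij: "j \<noteq> i" using third[OF n4, of i i i] by blast
      have "aff p q (\<lambda>k l. mm p q C (G p i j) k l - mm p q (G p i j) C k l) (\<lambda>k. mv p q C (\<lambda>_. 0) k - mv p q (G p i j) c0 k)
          = aff p q (\<lambda>_ _. 0) (\<lambda>_. 0)"
        using brz[OF aff_in_hpq[OF skew_G[OF ij[symmetric]], where b="\<lambda>_. 0" and q=q]] ij unfolding Wf br_aff vzero_aff[of p q] by simp
      then have "mv p q C (\<lambda>_. 0) j - mv p q (G p i j) c0 j = 0" unfolding aff_eq_iff using j by blast
      then show ?thesis using mv_G[OF i j ij[symmetric], of c0 j] by simp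
    qed
    have "f [] = vzero" unfolding Wf vzero_aff[of p q] aff_eq_iff using Cz cz by simp
    then show "f \<in> BL p q 0" using fC by (simp add: BL_def eq_on_def)
  qed
  have P2: "(\<lambda>xs. Imap p q (hd xs)) \<in> ZL p q 1"
  proof -
    have "(\<lambda>xs. Imap p q (hd xs)) \<in> CL p q 1"
      unfolding CL_def
    proof (rule CollectI, intro allI impI)
      fix xs :: "vf list" assume h: "length xs = 1 \<and> set xs \<subseteq> hpq p q"
      then obtain X where xs: "xs = [X]" using len1 by blast
      have X: "X \<in> hpq p q" using h xs by simp
      have "Imap p q (hd xs) \<in> hpq p q" using X xs Imap_hpq by simp
      moreover have "\<forall>i<1. \<forall>u\<in>hpq p q. \<forall>v\<in>hpq p q. \<forall>c. Imap p q (hd (xs[i := vadd u (vsc c v)])) =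
            vadd (Imap p q (hd (xs[i := u]))) (vsc c (Imap p q (hd (xs[i := v]))))"
        using Imap_lin xs by simp
      ultimately show "Imap p q (hd xs) \<in> hpq p q \<and> (\<forall>i<1. \<forall>u\<in>hpq p q. \<forall>v\<in>hpq p q. \<forall>c. Imap p q (hd (xs[i := vadd u (vsc c v)])) =
            vadd (Imap p q (hd (xs[i := u]))) (vsc c (Imap p q (hd (xs[i := v])))))" by blast
    qed
    moreover have "eq_on p q (Suc 1) (cobdry p q (\<lambda>xs. Imap p q (hd xs))) (\<lambda>_. vzero)"
      unfolding eq_on_def
    proof (intro allI impI)
      fix xs :: "vf list" assume h: "length xs = Suc 1 \<and> set xs \<subseteq> hpq p q"
      then obtain X Y where xs: "xs = [X, Y]" using len2 by (metis Suc_1)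
      have X: "X \<in> hpq p q" and Y: "Y \<in> hpq p q" using h xs by auto
      show "cobdry p q (\<lambda>xs. Imap p q (hd xs)) xs = vzero"
        unfolding xs cobdry2 using Imap_der[OF X Y] by (simp add: vzero_def)
    qed
    ultimately show ?thesis by (simp add: ZL_def)
  qed
  have P3: "(\<lambda>xs. Imap p q (hd xs)) \<notin> BL p q 1"
  proof
    assume "(\<lambda>xs. Imap p q (hd xs)) \<in> BL p q 1"
    then obtain g where gC: "g \<in> CL p q 0" and eg: "eq_on p q 1 (\<lambda>xs. Imap p q (hd xs)) (cobdry p q g)"
      by (auto simp: BL_def)
    have W: "g [] \<in> hpq p q" using gC unfolding CL_def by force
    obtain C c0 where sC: "skew p q C" and Wf: "g [] = aff p q C c0" using W hpq_char by blast
    have T: "aff p q (\<lambda>_ _. 0) (ev 1) \<in> hpq p q" by (rule aff_in_hpq[OF skew_zero])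
    have "Imap p q (aff p q (\<lambda>_ _. 0) (ev 1)) = cobdry p q g [aff p q (\<lambda>_ _. 0) (ev 1)]"
    proof -
      let ?X = "aff p q (\<lambda>_ _. 0) (ev 1)"
      have "length [?X] = 1 \<and> set [?X] \<subseteq> hpq p q \<longrightarrow> (\<lambda>xs. Imap p q (hd xs)) [?X] = cobdry p q g [?X]"
        using eg unfolding eq_on_def by blast
      then show ?thesis using T by simp
    qed
    then have "aff p q (\<lambda>_ _. 0) (ev 1) = aff p q (\<lambda>k l. mm p q C (\<lambda>_ _. 0) k l - mm p q (\<lambda>_ _. 0) C k l) (\<lambda>k. mv p q C (ev 1) k - mv p q (\<lambda>_ _. 0) c0 k)"
      unfolding cobdry1 Wf br_aff Imap_aff[OF skew_zero] .
    then have "ev 1 1 = mv p q C (ev 1) 1 - mv p q (\<lambda>_ _. 0) c0 1" unfolding aff_eq_iff using one by blast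
    then have "C 1 1 = 1" using mv_ev[OF one] by (simp add: ev_def)
    moreover have "C 1 1 = 0" by (rule skew_diag[OF sC one])
    ultimately show False by simp
  qed
  have P4: "\<forall>f\<in>ZL p q 1. \<exists>c::real. \<exists>g\<in>BL p q 1. eq_on p q 1 f (\<lambda>xs. vadd (vsc c (Imap p q (hd xs))) (g xs))"
  proof
    fix f assume fZ: "f \<in> ZL p q 1"
    then have fC: "f \<in> CL p q 1" and ec: "eq_on p q (Suc (Suc 0)) (cobdry p q f) (\<lambda>_. vzero)" by (auto simp: ZL_def)
    define F where "F X = f [X]" for X
    have Fh: "F X \<in> hpq p q" if "X \<in> hpq p q" for X
      using fC that unfolding CL_def F_def by force
    have Fl: "linF p q F" unfolding linF_def
    proof (intro ballI allI)
      fix u v c assume u: "u \<in> hpq p q" and v: "v \<in> hpq p q"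
      have "\<forall>i<1. \<forall>u\<in>hpq p q. \<forall>v\<in>hpq p q. \<forall>c. f ([u][i := vadd u (vsc c v)]) = vadd (f ([u][i := u])) (vsc c (f ([u][i := v])))"
      proof -
        have "length [u] = 1 \<and> set [u] \<subseteq> hpq p q \<longrightarrow> f [u] \<in> hpq p q \<and> (\<forall>i<1. \<forall>u'\<in>hpq p q. \<forall>v\<in>hpq p q. \<forall>c. f ([u][i := vadd u' (vsc c v)]) = vadd (f ([u][i := u'])) (vsc c (f ([u][i := v]))))"
          using fC unfolding CL_def by blast
        then show ?thesis using u by simp
      qed
      then show "F (vadd u (vsc c v)) = vadd (F u) (vsc c (F v))" using u v unfolding F_def by simp
    qed
    have Fd: "F (br p q X Y) = vadd (br p q (F X) Y) (br p q X (F Y))" if X: "X \<in> hpq p q" and Y: "Y \<in> hpq p q" for X Y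
    proof -
      have "cobdry p q f [X, Y] = vzero" using ec X Y unfolding eq_on_def by auto
      then have e: "br p q X (f [Y]) x k + br p q (f [X]) Y x k - f [br p q X Y] x k = 0" for x k
        unfolding cobdry2 vzero_def by metis
      show ?thesis unfolding F_def vadd_def using e by (intro ext) (simp add: algebra_simps eq_diff_eq)
    qed
    have D: "derF p q F" unfolding derF_def using Fl Fh Fd by blast
    interpret dctx p q F using D n4 by unfold_locales
    let ?w = "aff p q Nm dd"
    have w: "?w \<in> hpq p q" by (rule aff_in_hpq[OF Nm_skew])
    define g where "g xs = br p q (hd xs) ?w" for xs :: "vf list"
    have gC: "g \<in> CL p q 1"
      unfolding CL_def
    proof (rule CollectI, intro allI impI)
      fix xs :: "vf list" assume h: "length xs = 1 \<and> set xs \<subseteq> hpq p q"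
      then obtain X where xs: "xs = [X]" using len1 by blast
      have X: "X \<in> hpq p q" using h xs by simp
      have "g xs \<in> hpq p q" unfolding g_def xs using br_hpq[OF X w] by simp
      moreover have "\<forall>i<1. \<forall>u\<in>hpq p q. \<forall>v\<in>hpq p q. \<forall>c. g (xs[i := vadd u (vsc c v)]) = vadd (g (xs[i := u])) (vsc c (g (xs[i := v])))"
        unfolding g_def xs using br_lin1[OF _ _ w] by simp
      ultimately show "g xs \<in> hpq p q \<and> (\<forall>i<1. \<forall>u\<in>hpq p q. \<forall>v\<in>hpq p q. \<forall>c. g (xs[i := vadd u (vsc c v)]) = vadd (g (xs[i := u])) (vsc c (g (xs[i := v]))))" by blast
    qed
    have hC: "(\<lambda>_. ?w) \<in> CL p q 0" unfolding CL_def using w by simp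
    have gB: "g \<in> BL p q 1"
    proof -
      have "eq_on p q 1 g (cobdry p q (\<lambda>_. ?w))"
        unfolding eq_on_def
      proof (intro allI impI)
        fix xs :: "vf list" assume h: "length xs = 1 \<and> set xs \<subseteq> hpq p q"
        then obtain X where xs: "xs = [X]" using len1 by blast
        show "g xs = cobdry p q (\<lambda>_. ?w) xs" unfolding xs cobdry1 g_def by simp
      qed
      then show ?thesis using gC hC by (auto simp: BL_def)
    qed
    have "eq_on p q 1 f (\<lambda>xs. vadd (vsc lam (Imap p q (hd xs))) (g xs))"
      unfolding eq_on_def
    proof (intro allI impI)
      fix xs :: "vf list" assume h: "length xs = 1 \<and> set xs \<subseteq> hpq p q"
      then obtain X where xs: "xs = [X]" using len1 by blast
      have X: "X \<in> hpq p q" using h xs by simp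
      have "f xs = F X" unfolding xs F_def ..
      also have "\<dots> = Hm X" by (rule main_F[OF X])
      finally show "f xs = vadd (vsc lam (Imap p q (hd xs))) (g xs)" unfolding Hm_def g_def xs by simp
    qed
    then show "\<exists>c::real. \<exists>g\<in>BL p q 1. eq_on p q 1 f (\<lambda>xs. vadd (vsc c (Imap p q (hd xs))) (g xs))"
      using gB by blast
  qed
  show ?thesis using P1 P2 P3 P4 by blast
qed


end
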